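(* Let $(A,d,\Delta,\mu)$ be a connected DG-bialgebra over $\mathbb{Z}_2$ and $\Omega A$ its reduced cobar construction. For $k\ge1$ define $E_{1,k}:\Omega A\otimes(\Omega A)^{\otimes k}\to\Omega A$ by $$E_{1,k}([a_1,\dots,a_n];y_1,\dots,y_k)=\sum_{1\le i_1<\cdots<i_k\le n}[a_1,\dots,a_{i_1-1},a_{i_1}\diamond y_1,a_{i_1+1},\dots,a_{i_k-1},a_{i_k}\diamond y_k,a_{i_k+1},\dots,a_n]$$ (so it is $0$ if $n<k$), and set $E_{1,0}(x)=x$. Then $(\Omega A,d_\Omega,\cdot,\{E_{1,k}\})$ is a homotopy G-algebra, i.e. for all $x,x_1,x_2,y_i,z_j\in\Omega A$: (1) (higher homotopies) for $k\ge1$, $d_\Omega E_{1,k}(x;y_1,\dots,y_k)+E_{1,k}(d_\Omega x;y_1,\dots,y_k)+\sum_{i}E_{1,k}(x;y_1,\dots,d_\Omega y_i,\dots,y_k)= y_1\cdot E_{1,k-1}(x;y_2,\dots,y_k)+E_{1,k-1}(x;y_1,\dots,y_{k-1})\cdot y_k+\sum_{i=1}^{k-1}E_{1,k-1}(x;y_1,\dots,y_i\cdot y_{i+1},\dots,y_k)$; (2) (distributivity) for $k\ge1$, $E_{1,k}(x_1\cdot x_2;y_1,\dots,y_k)=x_1\cdot E_{1,k}(x_2;y_1,\dots,y_k)+E_{1,k}(x_1;y_1,\dots,y_k)\cdot x_2+\sum_{p=1}^{k-1}E_{1,p}(x_1;y_1,\dots,y_p)\cdot E_{1,k-p}(x_2;y_{p+1},\dots,y_k)$;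 (3) (higher pre-Jacobi identities) for $m,n\ge1$, $E_{1,n}(E_{1,m}(x;y_1,\dots,y_m);z_1,\dots,z_n)=\sum E_{1,\,n-(n_1+\cdots+n_m)+m}\big(x;z_1,\dots,z_{i_1},E_{1,n_1}(y_1;z_{i_1+1},\dots,z_{i_1+n_1}),z_{i_1+n_1+1},\dots,z_{i_2},E_{1,n_2}(y_2;z_{i_2+1},\dots,z_{i_2+n_2}),\dots,z_{i_m},E_{1,n_m}(y_m;z_{i_m+1},\dots,z_{i_m+n_m}),z_{i_m+n_m+1},\dots,z_n\big)$, the sum over all $n_1,\dots,n_m\ge0$ and $0\le i_1\le i_1+n_1\le i_2\le i_2+n_2\le\cdots\le i_m\le i_m+n_m\le n$. In particular $E_{1,1}$ is the Adams $\smile_1$-product, $[a_1,\dots,a_m]\smile_1[b_1,\dots,b_n]=\sum_k[a_1,\dots,a_{k-1},a_k^{(1)}\cdot b_1,\dots,a_k^{(n)}\cdot b_n,a_{k+1},\dots,a_m]$.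
   Context: Work over $\mathbb{Z}_2$ (signs ignored). A DG-bialgebra $(A,d,\Delta,\mu)$ is a DG-coalgebra with counit together with an associative unital multiplication $a\cdot b=\mu(a\otimes b)$ which is a morphism of DG-coalgebras; connected means degree-0 part $\mathbb{Z}_2$; $\bar A$ is the positive part. $\Delta^s:A\to A^{\otimes s}$ is the iterated diagonal ($\Delta^1=\mathrm{id}$, $\Delta^s=(\Delta^{s-1}\otimes\mathrm{id})\Delta$), written $\Delta^s(a)=a^{(1)}\otimes\cdots\otimes a^{(s)}$ with summation understood. Write $\Delta=\mathrm{id}\otimes1+1\otimes\mathrm{id}+\Delta'$. The reduced cobar construction $\Omega A$ is the tensor algebra $T(s\bar A)$ with elements $[a_1,\dots,a_n]$, concatenation product $\cdot$, and differential the derivation $d_\Omega$ with $d_\Omega[a]=[da]+\sum[a',a'']$ for $\Delta'(a)=\sum a'\otimes a''$. For $a\in\bar A$ and $y=[b_1,\dots,b_s]\in\Omega A$, $a\diamond y$ denotes the string $a^{(1)}\cdot b_1,\dots,a^{(s)}\cdot b_s$ (using $\Delta^s(a)$), inserted into the bracket, extended linearly in $y$. *)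

theory Defs
  imports Main
begin

text \<open>A Z_2-vector space with basis of type 'x is represented by the finite subsets
  of 'x (a finite set = the sum of its elements).  Addition is symmetric difference.
  zsum f S is the Z_2-sum over s in S of the vectors f s.\<close>

definition zadd :: "'x set \<Rightarrow> 'x set \<Rightarrow> 'x set" where
  "zadd P Q = (P - Q) \<union> (Q - P)"

definition zsum :: "('i \<Rightarrow> 'x set) \<Rightarrow> 'i set \<Rightarrow> 'x set" where
  "zsum f S = {y. odd (card {s \<in> S. y \<in> f s})}"

text \<open>bunit is the unit 1 (a basis element), bcounit b is the value of the counit on
  the basis element b, bd b = d(b), bdiag b = Delta(b) in A (x) A (basis: pairs),
  bmult b c = b.c .  All maps are extended Z_2-linearly via zsum.\<close>

record 'b dgba =
  bdeg :: "'b \<Rightarrow> nat"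
  bd :: "'b \<Rightarrow> 'b set"
  bunit :: 'b
  bcounit :: "'b \<Rightarrow> bool"
  bdiag :: "'b \<Rightarrow> ('b \<times> 'b) set"
  bmult :: "'b \<Rightarrow> 'b \<Rightarrow> 'b set"

definition connected_dg_bialgebra :: "'b dgba \<Rightarrow> bool" where
  "connected_dg_bialgebra A \<longleftrightarrow>
     \<comment> \<open>finiteness (maps land in the vector space)\<close>
     (\<forall>b. finite (bd A b) \<and> finite (bdiag A b)) \<and> (\<forall>b c. finite (bmult A b c)) \<and>
     \<comment> \<open>grading: d homogeneous of degree +1 or -1, Delta, mu, counit of degree 0\<close>
     (\<exists>\<delta>::int. (\<delta> = 1 \<or> \<delta> = -1) \<and>
        (\<forall>b x. x \<in> bd A b \<longrightarrow> int (bdeg A x) = int (bdeg A b) + \<delta>)) \<and>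
     (\<forall>b x y. (x, y) \<in> bdiag A b \<longrightarrow> bdeg A x + bdeg A y = bdeg A b) \<and>
     (\<forall>b c x. x \<in> bmult A b c \<longrightarrow> bdeg A x = bdeg A b + bdeg A c) \<and>
     (\<forall>b. bcounit A b \<longrightarrow> bdeg A b = 0) \<and>
     \<comment> \<open>connected: the degree-0 part is spanned by the unit\<close>
     (\<forall>b. bdeg A b = 0 \<longleftrightarrow> b = bunit A) \<and>
     \<comment> \<open>DG-coalgebra with counit\<close>
     (\<forall>b. zsum (bd A) (bd A b) = {}) \<and>
     (\<forall>b. zsum (\<lambda>(x, y). zsum (\<lambda>(u, v). {(u, v, y)}) (bdiag A x)) (bdiag A b)
          = zsum (\<lambda>(x, y). zsum (\<lambda>(u, v). {(x, u, v)}) (bdiag A y)) (bdiag A b)) \<and>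
     (\<forall>b. zsum (\<lambda>(x, y). if bcounit A x then {y} else {}) (bdiag A b) = {b}) \<and>
     (\<forall>b. zsum (\<lambda>(x, y). if bcounit A y then {x} else {}) (bdiag A b) = {b}) \<and>
     (\<forall>b. zsum (bdiag A) (bd A b)
          = zsum (\<lambda>(x, y). zadd (zsum (\<lambda>u. {(u, y)}) (bd A x)) (zsum (\<lambda>v. {(x, v)}) (bd A y)))
                 (bdiag A b)) \<and>
     (\<forall>b. even (card {x \<in> bd A b. bcounit A x})) \<and>
     \<comment> \<open>associative unital multiplication\<close>
     (\<forall>b c g. zsum (\<lambda>x. bmult A x g) (bmult A b c) = zsum (\<lambda>x. bmult A b x) (bmult A c g)) \<and>
     (\<forall>b. bmult A (bunit A) b = {b} \<and> bmult A b (bunit A) = {b}) \<and>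
     \<comment> \<open>multiplication is a morphism of DG-coalgebras\<close>
     (\<forall>b c. zsum (bd A) (bmult A b c)
          = zadd (zsum (\<lambda>x. bmult A x c) (bd A b)) (zsum (\<lambda>x. bmult A b x) (bd A c))) \<and>
     (\<forall>b c. zsum (bdiag A) (bmult A b c)
          = zsum (\<lambda>((x1, y1), (x2, y2)). zsum (\<lambda>u. zsum (\<lambda>v. {(u, v)}) (bmult A y1 y2)) (bmult A x1 x2))
                 (bdiag A b \<times> bdiag A c)) \<and>
     (\<forall>b c. odd (card {x \<in> bmult A b c. bcounit A x}) \<longleftrightarrow> bcounit A b \<and> bcounit A c)"

text \<open>Basis of Omega A: words [a_1,...,a_n] of basis elements of A-bar (i.e. different
  from the unit); an element of Omega A is a finite set of such words.\<close>

definition Om :: "'b dgba \<Rightarrow> 'b list set \<Rightarrow> bool" where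
  "Om A X \<longleftrightarrow> finite X \<and> (\<forall>w\<in>X. bunit A \<notin> set w)"

definition omult :: "'b list set \<Rightarrow> 'b list set \<Rightarrow> 'b list set" where
  "omult X Y = zsum (\<lambda>v. zsum (\<lambda>w. {v @ w}) Y) X"

definition rdiag :: "'b dgba \<Rightarrow> 'b \<Rightarrow> ('b \<times> 'b) set" where
  "rdiag A a = zadd (bdiag A a) (zadd {(a, bunit A)} {(bunit A, a)})"

definition dgen :: "'b dgba \<Rightarrow> 'b \<Rightarrow> 'b list set" where
  "dgen A a = zadd (zsum (\<lambda>x. {[x]}) (bd A a)) (zsum (\<lambda>(x, y). {[x, y]}) (rdiag A a))"

definition dO_word :: "'b dgba \<Rightarrow> 'b list \<Rightarrow> 'b list set" where
  "dO_word A w = zsum (\<lambda>i. zsum (\<lambda>u. {take i w @ u @ drop (Suc i) w}) (dgen A (w ! i)))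
                      {..<length w}"

definition dO :: "'b dgba \<Rightarrow> 'b list set \<Rightarrow> 'b list set" where
  "dO A X = zsum (dO_word A) X"

text \<open>diag_iter A s b = Delta^s(b) in A^{(x)s} (basis: lists of length s);
  Delta^1 = id, Delta^s = (Delta^{s-1} (x) id) Delta; Delta^0 is the counit.\<close>
fun diag_iter :: "'b dgba \<Rightarrow> nat \<Rightarrow> 'b \<Rightarrow> 'b list set" where
  "diag_iter A 0 b = (if bcounit A b then {[]} else {})"
| "diag_iter A (Suc 0) b = {[b]}"
| "diag_iter A (Suc (Suc n)) b =
     zsum (\<lambda>(x, y). zsum (\<lambda>l. {l @ [y]}) (diag_iter A (Suc n) x)) (bdiag A b)"

text \<open>a \<diamond> [b_1,...,b_s] = the string a^(1).b_1, ..., a^(s).b_s (multilinearly expanded)\<close>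
definition diamond :: "'b dgba \<Rightarrow> 'b \<Rightarrow> 'b list \<Rightarrow> 'b list set" where
  "diamond A a w = zsum (\<lambda>cs. listset (map2 (bmult A) cs w)) (diag_iter A (length w) a)"

definition incseqs :: "nat \<Rightarrow> nat \<Rightarrow> nat list set" where
  "incseqs k n = {is. length is = k \<and> sorted_wrt (<) is \<and> set is \<subseteq> {..<n}}"

text \<open>E_{1,k} on basis words; 0-based positions i_1 < ... < i_k < n; the position j = i_r
  is replaced by a_j \<diamond> y_r, where r - 1 = number of chosen positions below j.\<close>
definition E_word :: "'b dgba \<Rightarrow> 'b list \<Rightarrow> 'b list list \<Rightarrow> 'b list set" where
  "E_word A x ys =
     (if ys = [] then {x} else
      zsum (\<lambda>is. zsum (\<lambda>cs. {concat cs})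
                   (listset (map (\<lambda>j. if j \<in> set is
                                        then diamond A (x ! j) (ys ! card {i \<in> set is. i < j})
                                        else {[x ! j]}) [0..<length x])))
           (incseqs (length ys) (length x)))"

definition E :: "'b dgba \<Rightarrow> 'b list set \<Rightarrow> 'b list set list \<Rightarrow> 'b list set" where
  "E A X Ys = zsum (\<lambda>x. zsum (\<lambda>ys. E_word A x ys) (listset Ys)) X"

text \<open>With 0-based j, is ! j = i_{j+1}, ns ! j = n_{j+1};
  jprev is ns j = i_j + n_j (and 0 for j = 0).\<close>
definition jprev :: "nat list \<Rightarrow> nat list \<Rightarrow> nat \<Rightarrow> nat" where
  "jprev is ns j = (if j = 0 then 0 else is ! (j - 1) + ns ! (j - 1))"

definition jac_index :: "nat \<Rightarrow> nat \<Rightarrow> (nat list \<times> nat list) set" where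
  "jac_index m n = {(is, ns). length is = m \<and> length ns = m \<and>
                       (\<forall>j<m. jprev is ns j \<le> is ! j) \<and> jprev is ns m \<le> n}"

definition jac_args :: "'b dgba \<Rightarrow> 'b list set list \<Rightarrow> 'b list set list \<Rightarrow> nat list \<Rightarrow> nat list
                          \<Rightarrow> 'b list set list" where
  "jac_args A ys zs is ns =
     concat (map (\<lambda>j. take (is ! j - jprev is ns j) (drop (jprev is ns j) zs)
                      @ [E A (ys ! j) (take (ns ! j) (drop (is ! j) zs))]) [0..<length ys])
     @ drop (jprev is ns (length ys)) zs"

definition cup1_word :: "'b dgba \<Rightarrow> 'b list \<Rightarrow> 'b list \<Rightarrow> 'b list set" where
  "cup1_word A a w = zsum (\<lambda>k. zsum (\<lambda>c. {take k a @ c @ drop (Suc k) a}) (diamond A (a ! k) w))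
                          {..<length a}"

definition cup1 :: "'b dgba \<Rightarrow> 'b list set \<Rightarrow> 'b list set \<Rightarrow> 'b list set" where
  "cup1 A X Y = zsum (\<lambda>x. zsum (\<lambda>y. cup1_word A x y) Y) X"

end

theory Submission
  imports Defs
begin

lemma zadd_assoc: "zadd (zadd a b) c = zadd a (zadd b c)"
  unfolding zadd_def by blast
lemma zadd_comm: "zadd a b = zadd b a"
  unfolding zadd_def by blast
lemma zadd_empty[simp]: "zadd {} a = a" "zadd a {} = a"
  unfolding zadd_def by blast+
lemma zadd_self[simp]: "zadd a a = {}"
  unfolding zadd_def by blast
lemma finite_zadd[simp]: "finite a \<Longrightarrow> finite b \<Longrightarrow> finite (zadd a b)"
  unfolding zadd_def by blast

typedef 'x fz = "{X :: 'x set. finite X}" morphisms elts Zv by auto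

lemma finite_elts[simp]: "finite (elts X)"
  using elts by auto

lemma Zv_inverse'[simp]: "finite X \<Longrightarrow> elts (Zv X) = X"
  by (simp add: Zv_inverse)

lemma Zv_inj: "finite X \<Longrightarrow> finite Y \<Longrightarrow> Zv X = Zv Y \<Longrightarrow> X = Y"
  by (metis Zv_inverse')

instantiation fz :: (type) ab_group_add
begin
definition zero_fz_def: "0 = Zv {}"
definition plus_fz_def: "X + Y = Zv (zadd (elts X) (elts Y))"
definition uminus_fz_def: "- (X::'a fz) = X"
definition minus_fz_def: "(X::'a fz) - Y = X + Y"
instance
proof
  fix a b c :: "'a fz"
  show "a + b + c = a + (b + c)" unfolding plus_fz_def by (simp add: zadd_assoc)
  show "a + b = b + a" unfolding plus_fz_def by (simp add: zadd_comm)
  show "0 + a = a" unfolding plus_fz_def zero_fz_def by (simp add: elts_inverse)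
  show "- a + a = 0" unfolding plus_fz_def zero_fz_def uminus_fz_def by simp
  show "a - b = a + - b" unfolding minus_fz_def uminus_fz_def by simp
qed
end

lemma fz_add_self[simp]: "(X::'a fz) + X = 0"
  by (metis ab_left_minus uminus_fz_def)
lemma fz_add_self2[simp]: "(X::'a fz) + (X + Y) = Y"
  by (simp add: add.assoc[symmetric])
lemma fz_minus[simp]: "(X::'a fz) - Y = X + Y" "- X = X"
  by (simp_all add: minus_fz_def uminus_fz_def)

lemma elts_zero[simp]: "elts 0 = {}"
  by (simp add: zero_fz_def)
lemma elts_plus: "elts (X + Y) = zadd (elts X) (elts Y)"
  by (simp add: plus_fz_def)

lemma fz_eqI: "elts X = elts Y \<Longrightarrow> X = Y"
  by (simp add: elts_inject)

lemma Zv_zadd: "finite A \<Longrightarrow> finite B \<Longrightarrow> Zv (zadd A B) = Zv A + Zv B"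
  by (simp add: plus_fz_def)
lemma Zv_empty[simp]: "Zv {} = 0"
  by (simp add: zero_fz_def)

definition bas :: "'x \<Rightarrow> 'x fz" where "bas v = Zv {v}"

lemma elts_bas[simp]: "elts (bas v) = {v}" by (simp add: bas_def)

lemma sum_bas: "finite S \<Longrightarrow> sum bas S = Zv S"
proof (induction S rule: finite_induct)
  case empty thus ?case by simp
next
  case (insert x F)
  have "Zv (insert x F) = Zv (zadd {x} F)"
    using insert by (simp add: zadd_def)
  also have "\<dots> = bas x + Zv F" using insert by (simp add: Zv_zadd bas_def)
  finally show ?case using insert by simp
qed

lemma fz_decomp: "X = sum bas (elts X)"
  by (simp add: sum_bas elts_inverse)

lemma zsum_insert: "finite S \<Longrightarrow> s \<notin> S \<Longrightarrow> zsum f (insert s S) = zadd (f s) (zsum f S)"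
proof -
  assume fin: "finite S" and ns: "s \<notin> S"
  have "\<And>y. card {t \<in> insert s S. y \<in> f t} = (if y \<in> f s then Suc (card {t \<in> S. y \<in> f t}) else card {t \<in> S. y \<in> f t})"
  proof -
    fix y
    show "card {t \<in> insert s S. y \<in> f t} = (if y \<in> f s then Suc (card {t \<in> S. y \<in> f t}) else card {t \<in> S. y \<in> f t})"
    proof (cases "y \<in> f s")
      case True
      hence "{t \<in> insert s S. y \<in> f t} = insert s {t \<in> S. y \<in> f t}" by auto
      thus ?thesis using True fin ns by simp
    next
      case False
      hence "{t \<in> insert s S. y \<in> f t} = {t \<in> S. y \<in> f t}" by auto
      thus ?thesis using False by simp
    qed
  qed
  thus ?thesis unfolding zsum_def zadd_def by auto
qed

lemma zsum_empty[simp]: "zsum f {} = {}" by (simp add: zsum_def)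

lemma finite_zsum: "finite S \<Longrightarrow> (\<And>s. s \<in> S \<Longrightarrow> finite (f s)) \<Longrightarrow> finite (zsum f S)"
proof (induction S rule: finite_induct)
  case empty thus ?case by simp
next
  case (insert x F) thus ?case by (simp add: zsum_insert)
qed

lemma Zv_zsum: "finite S \<Longrightarrow> (\<And>s. s \<in> S \<Longrightarrow> finite (f s)) \<Longrightarrow> Zv (zsum f S) = (\<Sum>s\<in>S. Zv (f s))"
proof (induction S rule: finite_induct)
  case empty thus ?case by simp
next
  case (insert x F)
  thus ?case by (simp add: zsum_insert Zv_zadd finite_zsum)
qed

lemma zsum_sum: "finite S \<Longrightarrow> (\<And>s. s \<in> S \<Longrightarrow> finite (f s)) \<Longrightarrow> zsum f S = elts (\<Sum>s\<in>S. Zv (f s))"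
  by (metis Zv_zsum Zv_inverse' finite_zsum)

definition lin :: "('x \<Rightarrow> 'y::ab_group_add) \<Rightarrow> 'x fz \<Rightarrow> 'y" where
  "lin f X = sum f (elts X)"

lemma sum_zadd_fz: "finite A \<Longrightarrow> finite B \<Longrightarrow> sum (f :: _ \<Rightarrow> 'y fz) (zadd A B) = sum f A + sum f B"
proof -
  assume fa: "finite A" and fb: "finite B"
  have e1: "A - (A \<inter> B) = A - B" "B - (A \<inter> B) = B - A" by blast+
  have "sum f A = sum f (A - (A \<inter> B)) + sum f (A \<inter> B)"
    using fa by (intro sum.subset_diff) auto
  hence "sum f A = sum f (A - B) + sum f (A \<inter> B)" by (simp only: e1)
  moreover have "sum f B = sum f (B - (A \<inter> B)) + sum f (A \<inter> B)"
    using fb by (intro sum.subset_diff) auto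
  hence "sum f B = sum f (B - A) + sum f (A \<inter> B)" by (simp only: e1)
  moreover have "sum f (zadd A B) = sum f (A - B) + sum f (B - A)"
    unfolding zadd_def using fa fb by (intro sum.union_disjoint) auto
  ultimately show ?thesis by (simp add: algebra_simps)
qed

lemma lin_add[simp]: "lin (f :: _ \<Rightarrow> 'y fz) (X + Y) = lin f X + lin f Y"
  unfolding lin_def by (simp add: elts_plus sum_zadd_fz)
lemma lin_zero[simp]: "lin f 0 = 0"
  unfolding lin_def by simp
lemma lin_bas[simp]: "lin f (bas v) = f v"
  unfolding lin_def by simp
lemma lin_sum: "lin (f :: _ \<Rightarrow> 'y fz) (sum g S) = (\<Sum>s\<in>S. lin f (g s))"
  by (induction S rule: infinite_finite_induct) auto
lemma lin_Zv: "finite S \<Longrightarrow> lin f (Zv S) = sum f S"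
  by (simp add: lin_def)
lemma lin_fadd: "lin (\<lambda>x. f x + g x) X = lin f X + lin g X"
  unfolding lin_def by (simp add: sum.distrib)
lemma lin_fzero[simp]: "lin (\<lambda>x. 0) X = 0"
  unfolding lin_def by simp
lemma lin_fsum: "lin (\<lambda>x. \<Sum>i\<in>I. f i x) X = (\<Sum>i\<in>I. lin (f i) X)"
  unfolding lin_def by (rule sum.swap)
lemma lin_bas_id[simp]: "lin bas X = X"
  unfolding lin_def by (metis fz_decomp)
lemma lin_cong: "(\<And>x. x \<in> elts X \<Longrightarrow> f x = g x) \<Longrightarrow> lin f X = lin g X"
  unfolding lin_def by (rule sum.cong) auto
lemma lin_lin: "lin (f :: _ \<Rightarrow> 'y fz) (lin g X) = lin (\<lambda>x. lin f (g x)) X"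
proof -
  have "lin f (lin g X) = lin f (sum g (elts X))" by (simp only: lin_def[of g])
  also have "\<dots> = (\<Sum>x\<in>elts X. lin f (g x))" by (rule lin_sum)
  finally show ?thesis by (simp only: lin_def[of "\<lambda>x. lin f (g x)"])
qed

definition linear_fz :: "('x fz \<Rightarrow> 'y fz) \<Rightarrow> bool" where
  "linear_fz T \<longleftrightarrow> (\<forall>X Y. T (X + Y) = T X + T Y)"

lemma linear_fz_zero: "linear_fz T \<Longrightarrow> T 0 = 0"
  unfolding linear_fz_def by (metis add_cancel_right_right)
lemma linear_fz_sum: "linear_fz T \<Longrightarrow> T (sum g S) = (\<Sum>s\<in>S. T (g s))"
  by (induction S rule: infinite_finite_induct) (auto simp: linear_fz_zero linear_fz_def)
lemma linear_fz_lin: "linear_fz T \<Longrightarrow> T (lin f X) = lin (\<lambda>x. T (f x)) X"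
  unfolding lin_def by (simp add: linear_fz_sum)
lemma linear_fz_is_lin: "linear_fz T \<Longrightarrow> T X = lin (\<lambda>x. T (bas x)) X"
  by (metis lin_bas_id linear_fz_lin)
lemma linear_fz_linI[simp]: "linear_fz (lin f)"
  unfolding linear_fz_def by simp


lemma lin_swap: "lin (\<lambda>x. lin (\<lambda>y. f x y) Y) X = lin (\<lambda>y. lin (\<lambda>x. f x y) X) Y"
  unfolding lin_def by (rule sum.swap)

instantiation list :: (type) monoid_mult
begin
definition times_list_def: "(xs::'a list) * ys = xs @ ys"
definition one_list_def: "(1::'a list) = []"
instance by standard (auto simp: times_list_def one_list_def)
end

instantiation fz :: (monoid_mult) ring_1
begin
definition times_fz_def: "X * Y = lin (\<lambda>v. lin (\<lambda>w. bas (v * w)) Y) X"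
definition one_fz_def: "1 = bas 1"

lemma bas_mult0: "bas v * bas w = bas (v * w)"
  by (simp add: times_fz_def)

lemma mult_lin_left0: "(lin f X :: 'a fz) * Z = lin (\<lambda>x. f x * Z) X"
  unfolding times_fz_def[of "lin f X"] by (simp add: lin_lin times_fz_def)

lemma mult_lin_right0: "(Z :: 'a fz) * lin f X = lin (\<lambda>x. Z * f x) X"
  unfolding times_fz_def by (simp add: lin_lin lin_swap[of _ X])

instance
proof
  fix a b c :: "'a fz"
  have ab: "a = lin bas a" "b = lin bas b" "c = lin bas c" by simp_all
  have Bc: "\<And>u (C::'a fz). bas u * C = lin (\<lambda>z. bas (u * z)) C"
    by (simp add: times_fz_def)
  have L1: "\<And>X Z::'a fz. X * Z = lin (\<lambda>v. bas v * Z) X"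
    by (simp add: times_fz_def Bc)
  have "a * b * c = lin (\<lambda>v. bas v * b * c) a"
    by (subst L1[of a b]) (simp only: mult_lin_left0)
  also have "\<dots> = lin (\<lambda>v. lin (\<lambda>w. lin (\<lambda>z. bas (v * w * z)) c) b) a"
  proof (rule lin_cong)
    fix v
    have "bas v * b * c = lin (\<lambda>w. bas (v * w) * c) b"
      by (simp only: Bc[of v b] mult_lin_left0)
    also have "\<dots> = lin (\<lambda>w. lin (\<lambda>z. bas (v * w * z)) c) b"
      by (simp only: Bc)
    finally show "bas v * b * c = lin (\<lambda>w. lin (\<lambda>z. bas (v * w * z)) c) b" .
  qed
  also have "\<dots> = a * (b * c)"
  proof -
    have "a * (b * c) = lin (\<lambda>v. bas v * (b * c)) a" by (rule L1)
    also have "\<dots> = lin (\<lambda>v. lin (\<lambda>w. lin (\<lambda>z. bas (v * w * z)) c) b) a"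
    proof (rule lin_cong)
      fix v
      have "bas v * (b * c) = bas v * lin (\<lambda>w. lin (\<lambda>z. bas (w * z)) c) b"
        by (simp only: L1[of b c] Bc)
      also have "\<dots> = lin (\<lambda>w. lin (\<lambda>z. bas v * bas (w * z)) c) b"
        by (simp only: mult_lin_right0)
      also have "\<dots> = lin (\<lambda>w. lin (\<lambda>z. bas (v * w * z)) c) b"
        by (simp add: bas_mult0 mult.assoc)
      finally show "bas v * (b * c) = lin (\<lambda>w. lin (\<lambda>z. bas (v * w * z)) c) b" .
    qed
    finally show ?thesis by simp
  qed
  finally show "a * b * c = a * (b * c)" .
  show "(a + b) * c = a * c + b * c" by (simp add: times_fz_def)
  show "a * (b + c) = a * b + a * c" by (simp add: times_fz_def lin_fadd)
  show "1 * a = a" by (simp add: one_fz_def Bc)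
  show "a * 1 = a" by (subst L1) (simp add: one_fz_def bas_mult0)
  show "(0::'a fz) \<noteq> 1"
    by (metis elts_bas elts_zero insert_not_empty one_fz_def)
qed
end

lemma bas_mult: "bas v * bas w = bas (v * w)" by (rule bas_mult0)
lemma mult_lin_left: "(lin f X :: 'a::monoid_mult fz) * Z = lin (\<lambda>x. f x * Z) X"
  by (rule mult_lin_left0)
lemma mult_lin_right: "(Z :: 'a::monoid_mult fz) * lin f X = lin (\<lambda>x. Z * f x) X"
  by (rule mult_lin_right0)
lemma bas_append: "bas (v @ w) = bas v * bas w"
  by (simp add: bas_mult times_list_def)
lemma bas_Nil: "bas [] = 1"
  by (simp add: one_fz_def one_list_def)
lemma bas_Cons: "bas (a # w) = bas [a] * bas w"
  by (simp add: bas_append[symmetric])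


fun mlin :: "('x list \<Rightarrow> 'y fz) \<Rightarrow> 'x fz list \<Rightarrow> 'y fz" where
  "mlin f [] = f []"
| "mlin f (Y # Ys) = lin (\<lambda>y. mlin (\<lambda>ys. f (y # ys)) Ys) Y"

lemma mlin_fadd: "mlin (\<lambda>ys. f ys + g ys) Ys = mlin f Ys + mlin g Ys"
  by (induction Ys arbitrary: f g) (auto simp: lin_fadd)

lemma mlin_linear: "linear_fz T \<Longrightarrow> mlin (\<lambda>ys. T (f ys)) Ys = T (mlin f Ys)"
  by (induction Ys arbitrary: f) (auto simp: linear_fz_lin)

lemma mlin_fzero[simp]: "mlin (\<lambda>ys. 0) Ys = 0"
  by (induction Ys) auto

lemma mlin_fsum: "mlin (\<lambda>ys. \<Sum>i\<in>I. f i ys) Ys = (\<Sum>i\<in>I. mlin (f i) Ys)"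
  by (induction Ys arbitrary: f) (auto simp: lin_fsum)

lemma mlin_cong: "(\<And>ys. length ys = length Ys \<Longrightarrow> (\<forall>i<length ys. ys ! i \<in> elts (Ys ! i)) \<Longrightarrow> f ys = g ys)
   \<Longrightarrow> mlin f Ys = mlin g Ys"
proof (induction Ys arbitrary: f g)
  case Nil thus ?case by simp
next
  case (Cons Y Ys)
  show ?case
    apply simp
    apply (rule lin_cong)
    apply (rule Cons.IH)
    apply (rule Cons.prems)
     apply simp
    by (metis One_nat_def Suc_less_eq length_Cons less_Suc_eq_0_disj nth_Cons_0 nth_Cons_Suc)
qed

lemma linear_mult_left[simp]: "linear_fz (\<lambda>X. (c::'a::monoid_mult fz) * X)"
  unfolding linear_fz_def by (simp add: distrib_left)
lemma linear_mult_right[simp]: "linear_fz (\<lambda>X. X * (c::'a::monoid_mult fz))"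
  unfolding linear_fz_def by (simp add: distrib_right)

lemma mlin_mult_left: "mlin (\<lambda>ys. (c::'a::monoid_mult fz) * f ys) Ys = c * mlin f Ys"
  using mlin_linear[OF linear_mult_left] .
lemma mlin_mult_right: "mlin (\<lambda>ys. f ys * (c::'a::monoid_mult fz)) Ys = mlin f Ys * c"
  using mlin_linear[OF linear_mult_right] .

lemma lin_mult_left: "lin (\<lambda>y. (c::'a::monoid_mult fz) * f y) Y = c * lin f Y"
  by (simp add: mult_lin_right)
lemma lin_mult_right: "lin (\<lambda>y. f y * (c::'a::monoid_mult fz)) Y = lin f Y * c"
  by (simp add: mult_lin_left)

lemma mlin_bas: "mlin f (map bas ys) = f ys"
  by (induction ys arbitrary: f) auto


lemma mlin_split:
  "mlin (\<lambda>ys. f (take p ys) * g (drop p ys)) Ys = mlin f (take p Ys) * (mlin g (drop p Ys) :: 'a::monoid_mult fz)"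
proof (induction Ys arbitrary: p f)
  case Nil thus ?case by simp
next
  case (Cons Y Ys)
  show ?case
  proof (cases p)
    case 0 thus ?thesis by (simp add: mlin_mult_left)
  next
    case (Suc q)
    have "mlin (\<lambda>ys. f (take p ys) * g (drop p ys)) (Y # Ys)
        = lin (\<lambda>y. mlin (\<lambda>ys. f (y # take q ys) * g (drop q ys)) Ys) Y" using Suc by simp
    also have "\<dots> = lin (\<lambda>y. mlin (\<lambda>ys. f (y # ys)) (take q Ys) * mlin g (drop q Ys)) Y"
    proof (rule lin_cong)
      fix y
      show "mlin (\<lambda>ys. f (y # take q ys) * g (drop q ys)) Ys = mlin (\<lambda>ys. f (y # ys)) (take q Ys) * mlin g (drop q Ys)"
        using Cons.IH[where p=q and f="\<lambda>ys. f (y # ys)"] by simp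
    qed
    also have "\<dots> = mlin f (take p (Y # Ys)) * mlin g (drop p (Y # Ys))"
      using Suc by (simp add: lin_mult_right)
    finally show ?thesis .
  qed
qed

lemma mlin_append_split:
  "mlin (\<lambda>ys. f (take (length Xs) ys) * g (drop (length Xs) ys)) (Xs @ Zs) = mlin f Xs * (mlin g Zs :: 'a::monoid_mult fz)"
  using mlin_split[of f "length Xs" g "Xs @ Zs"] by simp

lemma listset_Cons: "listset (A # As) = {x # xs | x xs. x \<in> A \<and> xs \<in> listset As}"
  by (auto simp: set_Cons_def)

lemma finite_listset: "(\<And>A. A \<in> set As \<Longrightarrow> finite A) \<Longrightarrow> finite (listset As)"
proof (induction As)
  case Nil thus ?case by simp
next
  case (Cons A As)
  have "listset (A # As) = (\<lambda>(x, xs). x # xs) ` (A \<times> listset As)"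
    by (auto simp: set_Cons_def)
  thus ?case using Cons by simp
qed

lemma listset_length: "xs \<in> listset As \<Longrightarrow> length xs = length As"
  by (induction As arbitrary: xs) (auto simp: set_Cons_def)

lemma listset_nth: "xs \<in> listset As \<Longrightarrow> i < length As \<Longrightarrow> xs ! i \<in> As ! i"
  by (induction As arbitrary: xs i) (auto simp: set_Cons_def nth_Cons split: nat.splits)

lemma sum_listset_Cons:
  assumes "finite A" "\<And>B. B \<in> set As \<Longrightarrow> finite B"
  shows "(\<Sum>xs\<in>listset (A # As). h xs) = (\<Sum>x\<in>A. \<Sum>xs\<in>listset As. h (x # xs))"
proof -
  have e: "listset (A # As) = (\<lambda>p. fst p # snd p) ` (A \<times> listset As)"
    by (auto simp: set_Cons_def image_iff)
  have inj: "inj_on (\<lambda>p. fst p # snd p) (A \<times> listset As)" by (auto simp: inj_on_def)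
  have "(\<Sum>x\<in>A. \<Sum>xs\<in>listset As. h (x # xs)) = (\<Sum>p\<in>A \<times> listset As. h (fst p # snd p))"
    by (simp add: sum.cartesian_product split_def)
  also have "\<dots> = (\<Sum>xs\<in>listset (A # As). h xs)"
    unfolding e sum.reindex[OF inj] by (simp add: o_def)
  finally show ?thesis by simp
qed

lemma sum_listset_mlin:
  assumes "\<And>B. B \<in> set As \<Longrightarrow> finite B"
  shows "(\<Sum>xs\<in>listset As. (h xs :: 'y fz)) = mlin h (map Zv As)"
  using assms
proof (induction As arbitrary: h)
  case Nil thus ?case by simp
next
  case (Cons A As)
  have fA: "finite A" using Cons by simp
  show ?case
    using Cons by (simp add: sum_listset_Cons lin_Zv del: listset.simps(2))
qed

lemma Zv_zsum_listset:
  assumes "\<And>B. B \<in> set As \<Longrightarrow> finite B" "\<And>xs. xs \<in> listset As \<Longrightarrow> finite (F xs)"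
  shows "Zv (zsum F (listset As)) = mlin (\<lambda>xs. Zv (F xs)) (map Zv As)"
  using assms by (simp add: Zv_zsum finite_listset sum_listset_mlin)

lemma mlin_concat: "mlin (\<lambda>cs. bas (concat cs)) Ys = prod_list (Ys :: 'b list fz list)"
proof (induction Ys)
  case Nil thus ?case by (simp add: bas_Nil)
next
  case (Cons Y Ys)
  have "mlin (\<lambda>cs. bas (concat cs)) (Y # Ys) = lin (\<lambda>y. mlin (\<lambda>ys. bas y * bas (concat ys)) Ys) Y"
    by (simp add: bas_append)
  also have "\<dots> = lin (\<lambda>y. bas y * prod_list Ys) Y" by (simp add: mlin_mult_left Cons.IH)
  also have "\<dots> = Y * prod_list Ys" by (simp add: lin_mult_right)
  finally show ?case by simp
qed

lemma Zv_concat_listset: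
  assumes "\<And>B. B \<in> set As \<Longrightarrow> finite B"
  shows "Zv (zsum (\<lambda>cs. {concat cs}) (listset As)) = prod_list (map Zv As)"
  using assms by (simp add: Zv_zsum_listset mlin_concat[symmetric] bas_def)

lemma finite_omult: "finite X \<Longrightarrow> finite Y \<Longrightarrow> finite (omult X Y)"
  unfolding omult_def by (intro finite_zsum) auto

lemma Zv_omult: "finite X \<Longrightarrow> finite Y \<Longrightarrow> Zv (omult X Y) = Zv X * Zv Y"
proof -
  assume fX: "finite X" and fY: "finite Y"
  have "Zv (omult X Y) = (\<Sum>v\<in>X. Zv (zsum (\<lambda>w. {v @ w}) Y))"
    unfolding omult_def using fX fY by (intro Zv_zsum finite_zsum) auto
  also have "\<dots> = (\<Sum>v\<in>X. \<Sum>w\<in>Y. bas (v @ w))"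
    using fY by (simp add: Zv_zsum bas_def)
  also have "\<dots> = Zv X * Zv Y"
    using fX fY by (simp add: times_fz_def lin_Zv bas_mult times_list_def)
  finally show ?thesis .
qed


lemma zsum_subset: "zsum f S \<subseteq> \<Union> (f ` S)"
proof
  fix x assume "x \<in> zsum f S"
  hence "odd (card {s \<in> S. x \<in> f s})" by (simp add: zsum_def)
  hence "{s \<in> S. x \<in> f s} \<noteq> {}" by (metis card.empty even_zero)
  thus "x \<in> \<Union> (f ` S)" by blast
qed

lemma linear_lin_split: "lin (g :: _ \<Rightarrow> _ fz) (lin (\<lambda>(x, y). f x y) X) = lin (\<lambda>(x, y). lin g (f x y)) X"
  by (simp add: lin_lin split_def)

locale cdgb =
  fixes A :: "'b dgba"
  assumes cdg: "connected_dg_bialgebra A"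
begin

lemmas AX = cdg[unfolded connected_dg_bialgebra_def]
lemmas AX1 = AX[THEN conjunct1]
lemmas AX2 = AX[THEN conjunct2, THEN conjunct1]
lemmas AX3 = AX[THEN conjunct2, THEN conjunct2, THEN conjunct1]
lemmas AX4 = AX[THEN conjunct2, THEN conjunct2, THEN conjunct2, THEN conjunct1]
lemmas AX5 = AX[THEN conjunct2, THEN conjunct2, THEN conjunct2, THEN conjunct2, THEN conjunct1]
lemmas AX6 = AX[THEN conjunct2, THEN conjunct2, THEN conjunct2, THEN conjunct2, THEN conjunct2, THEN conjunct1]
lemmas AX7 = AX[THEN conjunct2, THEN conjunct2, THEN conjunct2, THEN conjunct2, THEN conjunct2, THEN conjunct2, THEN conjunct1]
lemmas AX8 = AX[THEN conjunct2, THEN conjunct2, THEN conjunct2, THEN conjunct2, THEN conjunct2, THEN conjunct2, THEN conjunct2, THEN conjunct1]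
lemmas AX9 = AX[THEN conjunct2, THEN conjunct2, THEN conjunct2, THEN conjunct2, THEN conjunct2, THEN conjunct2, THEN conjunct2, THEN conjunct2, THEN conjunct1]
lemmas AX10 = AX[THEN conjunct2, THEN conjunct2, THEN conjunct2, THEN conjunct2, THEN conjunct2, THEN conjunct2, THEN conjunct2, THEN conjunct2, THEN conjunct2, THEN conjunct1]
lemmas AX11 = AX[THEN conjunct2, THEN conjunct2, THEN conjunct2, THEN conjunct2, THEN conjunct2, THEN conjunct2, THEN conjunct2, THEN conjunct2, THEN conjunct2, THEN conjunct2, THEN conjunct1]
lemmas AX12 = AX[THEN conjunct2, THEN conjunct2, THEN conjunct2, THEN conjunct2, THEN conjunct2, THEN conjunct2, THEN conjunct2, THEN conjunct2, THEN conjunct2, THEN conjunct2, THEN conjunct2, THEN conjunct1]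
lemmas AX13 = AX[THEN conjunct2, THEN conjunct2, THEN conjunct2, THEN conjunct2, THEN conjunct2, THEN conjunct2, THEN conjunct2, THEN conjunct2, THEN conjunct2, THEN conjunct2, THEN conjunct2, THEN conjunct2, THEN conjunct1]
lemmas AX14 = AX[THEN conjunct2, THEN conjunct2, THEN conjunct2, THEN conjunct2, THEN conjunct2, THEN conjunct2, THEN conjunct2, THEN conjunct2, THEN conjunct2, THEN conjunct2, THEN conjunct2, THEN conjunct2, THEN conjunct2, THEN conjunct1]
lemmas AX15 = AX[THEN conjunct2, THEN conjunct2, THEN conjunct2, THEN conjunct2, THEN conjunct2, THEN conjunct2, THEN conjunct2, THEN conjunct2, THEN conjunct2, THEN conjunct2, THEN conjunct2, THEN conjunct2, THEN conjunct2, THEN conjunct2, THEN conjunct1]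
lemmas AX16 = AX[THEN conjunct2, THEN conjunct2, THEN conjunct2, THEN conjunct2, THEN conjunct2, THEN conjunct2, THEN conjunct2, THEN conjunct2, THEN conjunct2, THEN conjunct2, THEN conjunct2, THEN conjunct2, THEN conjunct2, THEN conjunct2, THEN conjunct2, THEN conjunct1]
lemmas AX17 = AX[THEN conjunct2, THEN conjunct2, THEN conjunct2, THEN conjunct2, THEN conjunct2, THEN conjunct2, THEN conjunct2, THEN conjunct2, THEN conjunct2, THEN conjunct2, THEN conjunct2, THEN conjunct2, THEN conjunct2, THEN conjunct2, THEN conjunct2, THEN conjunct2, THEN conjunct1]
lemmas AX18 = AX[THEN conjunct2, THEN conjunct2, THEN conjunct2, THEN conjunct2, THEN conjunct2, THEN conjunct2, THEN conjunct2, THEN conjunct2, THEN conjunct2, THEN conjunct2, THEN conjunct2, THEN conjunct2, THEN conjunct2, THEN conjunct2, THEN conjunct2, THEN conjunct2, THEN conjunct2]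

abbreviation uu where "uu \<equiv> bunit A"
abbreviation eps where "eps \<equiv> bcounit A"
abbreviation deg where "deg \<equiv> bdeg A"

lemma fin_bd[simp]: "finite (bd A b)" using AX1 by blast
lemma fin_diag[simp]: "finite (bdiag A b)" using AX1 by blast
lemma fin_mult[simp]: "finite (bmult A b c)" using AX2 by blast
lemma deg_diag: "(x, y) \<in> bdiag A b \<Longrightarrow> deg x + deg y = deg b" using AX4 by blast
lemma deg_mult: "x \<in> bmult A b c \<Longrightarrow> deg x = deg b + deg c" using AX5 by blast
lemma eps_deg: "eps b \<Longrightarrow> deg b = 0" using AX6 by blast
lemma deg0: "deg b = 0 \<longleftrightarrow> b = uu" using AX7 by simp
lemma ax_coassoc: "zsum (\<lambda>(x, y). zsum (\<lambda>(u, v). {(u, v, y)}) (bdiag A x)) (bdiag A b)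
          = zsum (\<lambda>(x, y). zsum (\<lambda>(u, v). {(x, u, v)}) (bdiag A y)) (bdiag A b)"
  using AX9 by blast
lemma ax_counitL: "zsum (\<lambda>(x, y). if eps x then {y} else {}) (bdiag A b) = {b}" using AX10 by blast
lemma ax_counitR: "zsum (\<lambda>(x, y). if eps y then {x} else {}) (bdiag A b) = {b}" using AX11 by blast
lemma ax_coder: "zsum (bdiag A) (bd A b)
          = zsum (\<lambda>(x, y). zadd (zsum (\<lambda>u. {(u, y)}) (bd A x)) (zsum (\<lambda>v. {(x, v)}) (bd A y)))
                 (bdiag A b)" using AX12 by blast
lemma ax_epsd: "even (card {x \<in> bd A b. eps x})" using AX13 by blast
lemma ax_assoc: "zsum (\<lambda>x. bmult A x g) (bmult A b c) = zsum (\<lambda>x. bmult A b x) (bmult A c g)" using AX14 by blast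
lemma ax_unit: "bmult A uu b = {b}" "bmult A b uu = {b}" using AX15 by blast+
lemma ax_leib: "zsum (bd A) (bmult A b c)
          = zadd (zsum (\<lambda>x. bmult A x c) (bd A b)) (zsum (\<lambda>x. bmult A b x) (bd A c))" using AX16 by blast
lemma ax_multdiag: "zsum (bdiag A) (bmult A b c)
          = zsum (\<lambda>((x1, y1), (x2, y2)). zsum (\<lambda>u. zsum (\<lambda>v. {(u, v)}) (bmult A y1 y2)) (bmult A x1 x2))
                 (bdiag A b \<times> bdiag A c)" using AX17 by blast
lemma ax_epsmult: "odd (card {x \<in> bmult A b c. eps x}) \<longleftrightarrow> eps b \<and> eps c" using AX18 by blast

lemma eps_one_imp: "eps b \<Longrightarrow> b = uu" using eps_deg deg0 by blast

lemma eps_one: "eps uu"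
proof (rule ccontr)
  assume "\<not> eps uu"
  hence "\<And>x. \<not> eps x" using eps_one_imp by blast
  hence "zsum (\<lambda>(x, y). if eps x then {y} else {}) (bdiag A uu) = {}"
    unfolding zsum_def by (auto simp: split_def)
  thus False using ax_counitL[of uu] by simp
qed

lemma eps_iff: "eps b \<longleftrightarrow> b = uu" using eps_one eps_one_imp by blast

lemma one_notin_bd: "uu \<notin> bd A b"
proof
  assume "uu \<in> bd A b"
  hence "{x \<in> bd A b. eps x} = {uu}" using eps_iff by auto
  thus False using ax_epsd[of b] by simp
qed

definition dA :: "'b \<Rightarrow> 'b fz" where "dA b = Zv (bd A b)"
definition Dg :: "'b \<Rightarrow> ('b \<times> 'b) fz" where "Dg b = Zv (bdiag A b)"
definition MM :: "'b \<Rightarrow> 'b \<Rightarrow> 'b fz" where "MM b c = Zv (bmult A b c)"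

lemma elts_dA[simp]: "elts (dA b) = bd A b" by (simp add: dA_def)
lemma elts_Dg[simp]: "elts (Dg b) = bdiag A b" by (simp add: Dg_def)
lemma elts_MM[simp]: "elts (MM b c) = bmult A b c" by (simp add: MM_def)

lemma Zv_bd[simp]: "Zv (bd A b) = dA b" by (simp add: dA_def)
lemma Zv_bdiag[simp]: "Zv (bdiag A b) = Dg b" by (simp add: Dg_def)
lemma Zv_bmult[simp]: "Zv (bmult A b c) = MM b c" by (simp add: MM_def)
lemma Zv_single[simp]: "Zv {x} = bas x" by (simp add: bas_def)

lemma MM_unit[simp]: "MM uu b = bas b" "MM b uu = bas b"
  unfolding MM_def by (simp_all add: ax_unit)

lemma Zv_zsum_fin: "finite S \<Longrightarrow> (\<And>s. s \<in> S \<Longrightarrow> finite (f s)) \<Longrightarrow> Zv (zsum f S) = lin (\<lambda>s. Zv (f s)) (Zv S)"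
  by (simp add: Zv_zsum lin_Zv)

lemma coassoc_lin:
  "lin (\<lambda>(x, y). lin (\<lambda>(u, v). (f u v y :: 'y fz)) (Dg x)) (Dg b) = lin (\<lambda>(x, y). lin (\<lambda>(u, v). f x u v) (Dg y)) (Dg b)"
proof -
  have "Zv (zsum (\<lambda>(x, y). zsum (\<lambda>(u, v). {(u, v, y)}) (bdiag A x)) (bdiag A b))
      = Zv (zsum (\<lambda>(x, y). zsum (\<lambda>(u, v). {(x, u, v)}) (bdiag A y)) (bdiag A b))"
    by (simp only: ax_coassoc)
  hence "lin (\<lambda>(x, y). lin (\<lambda>(u, v). bas (u, v, y)) (Dg x)) (Dg b) = lin (\<lambda>(x, y). lin (\<lambda>(u, v). bas (x, u, v)) (Dg y)) (Dg b)"
    by (simp add: Zv_zsum_fin split_def finite_zsum)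
  hence "lin (\<lambda>(u, v, y). f u v y) (lin (\<lambda>(x, y). lin (\<lambda>(u, v). bas (u, v, y)) (Dg x)) (Dg b))
       = lin (\<lambda>(u, v, y). f u v y) (lin (\<lambda>(x, y). lin (\<lambda>(u, v). bas (x, u, v)) (Dg y)) (Dg b))" by simp
  thus ?thesis by (simp add: lin_lin split_def)
qed

lemma counitL_lin: "lin (\<lambda>(x, y). if eps x then f y else 0) (Dg b) = (f b :: 'y fz)"
proof -
  have "Zv (zsum (\<lambda>(x, y). if eps x then {y} else {}) (bdiag A b)) = Zv {b}"
    by (simp only: ax_counitL)
  hence "lin (\<lambda>(x, y). if eps x then bas y else 0) (Dg b) = bas b"
    by (simp add: Zv_zsum_fin split_def if_distrib cong: if_cong)
  hence "lin f (lin (\<lambda>(x, y). if eps x then bas y else 0) (Dg b)) = f b" by simp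
  thus ?thesis by (simp add: lin_lin split_def if_distrib cong: if_cong)
qed

lemma counitR_lin: "lin (\<lambda>(x, y). if eps y then f x else 0) (Dg b) = (f b :: 'y fz)"
proof -
  have "Zv (zsum (\<lambda>(x, y). if eps y then {x} else {}) (bdiag A b)) = Zv {b}"
    by (simp only: ax_counitR)
  hence "lin (\<lambda>(x, y). if eps y then bas x else 0) (Dg b) = bas b"
    by (simp add: Zv_zsum_fin split_def if_distrib cong: if_cong)
  hence "lin f (lin (\<lambda>(x, y). if eps y then bas x else 0) (Dg b)) = f b" by simp
  thus ?thesis by (simp add: lin_lin split_def if_distrib cong: if_cong)
qed


lemma Dg_one: "Dg uu = bas (uu, uu)"
proof -
  have sub: "bdiag A uu \<subseteq> {(uu, uu)}"
  proof
    fix p assume "p \<in> bdiag A uu"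
    then obtain x y where p: "p = (x, y)" "(x, y) \<in> bdiag A uu" by (cases p) auto
    hence "deg x + deg y = 0" using deg_diag[of x y uu] deg0[of uu] by simp
    thus "p \<in> {(uu, uu)}" using p deg0 by auto
  qed
  have "bdiag A uu \<noteq> {}"
  proof
    assume "bdiag A uu = {}"
    thus False using ax_counitL[of uu] by simp
  qed
  hence "bdiag A uu = {(uu, uu)}" using sub by blast
  thus ?thesis using Zv_bdiag[of uu] by simp
qed

lemma coder_lin:
  "lin (\<lambda>c. lin (f :: _ \<Rightarrow> 'y fz) (Dg c)) (dA b)
   = lin (\<lambda>(x, y). lin (\<lambda>u. f (u, y)) (dA x) + lin (\<lambda>v. f (x, v)) (dA y)) (Dg b)"
proof -
  have "Zv (zsum (bdiag A) (bd A b))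
      = Zv (zsum (\<lambda>(x, y). zadd (zsum (\<lambda>u. {(u, y)}) (bd A x)) (zsum (\<lambda>v. {(x, v)}) (bd A y))) (bdiag A b))"
    by (simp only: ax_coder)
  hence "lin Dg (dA b) = lin (\<lambda>(x, y). lin (\<lambda>u. bas (u, y)) (dA x) + lin (\<lambda>v. bas (x, v)) (dA y)) (Dg b)"
    by (simp add: Zv_zsum_fin split_def finite_zsum Zv_zadd)
  hence "lin f (lin Dg (dA b)) = lin f (lin (\<lambda>(x, y). lin (\<lambda>u. bas (u, y)) (dA x) + lin (\<lambda>v. bas (x, v)) (dA y)) (Dg b))"
    by simp
  thus ?thesis by (simp add: lin_lin split_def)
qed

lemma assoc_lin:
  "lin (\<lambda>x. lin (f :: _ \<Rightarrow> 'y fz) (MM x g)) (MM b c) = lin (\<lambda>x. lin f (MM b x)) (MM c g)"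
proof -
  have "Zv (zsum (\<lambda>x. bmult A x g) (bmult A b c)) = Zv (zsum (\<lambda>x. bmult A b x) (bmult A c g))"
    by (simp only: ax_assoc)
  hence "lin (\<lambda>x. MM x g) (MM b c) = lin (\<lambda>x. MM b x) (MM c g)"
    by (simp add: Zv_zsum_fin)
  hence "lin f (lin (\<lambda>x. MM x g) (MM b c)) = lin f (lin (\<lambda>x. MM b x) (MM c g))" by simp
  thus ?thesis by (simp add: lin_lin)
qed

lemma leib_lin:
  "lin (\<lambda>x. lin (f :: _ \<Rightarrow> 'y fz) (dA x)) (MM b c)
   = lin (\<lambda>x. lin f (MM x c)) (dA b) + lin (\<lambda>x. lin f (MM b x)) (dA c)"
proof -
  have "Zv (zsum (bd A) (bmult A b c))
      = Zv (zadd (zsum (\<lambda>x. bmult A x c) (bd A b)) (zsum (\<lambda>x. bmult A b x) (bd A c)))"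
    by (simp only: ax_leib)
  hence "lin dA (MM b c) = lin (\<lambda>x. MM x c) (dA b) + lin (\<lambda>x. MM b x) (dA c)"
    by (simp add: Zv_zsum_fin Zv_zadd finite_zsum)
  hence "lin f (lin dA (MM b c)) = lin f (lin (\<lambda>x. MM x c) (dA b) + lin (\<lambda>x. MM b x) (dA c))" by simp
  thus ?thesis by (simp add: lin_lin)
qed

lemma lin_Zv_times: "finite S \<Longrightarrow> finite T \<Longrightarrow> lin h (Zv (S \<times> T)) = lin (\<lambda>p. lin (\<lambda>q. h (p, q)) (Zv T)) (Zv S)"
  by (simp add: lin_Zv sum.cartesian_product)

lemma multdiag_lin:
  "lin (\<lambda>e. lin (f :: _ \<Rightarrow> 'y fz) (Dg e)) (MM b c)
   = lin (\<lambda>(x1, y1). lin (\<lambda>(x2, y2). lin (\<lambda>u. lin (\<lambda>v. f (u, v)) (MM y1 y2)) (MM x1 x2)) (Dg c)) (Dg b)"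
proof -
  have "lin Dg (MM b c) = lin (\<lambda>(x1, y1). lin (\<lambda>(x2, y2). lin (\<lambda>u. lin (\<lambda>v. bas (u, v)) (MM y1 y2)) (MM x1 x2)) (Dg c)) (Dg b)"
    using arg_cong[OF ax_multdiag[of b c], of Zv]
    by (simp add: Zv_zsum_fin finite_zsum lin_Zv_times split_def)
  hence "lin f (lin Dg (MM b c)) = lin f (lin (\<lambda>(x1, y1). lin (\<lambda>(x2, y2). lin (\<lambda>u. lin (\<lambda>v. bas (u, v)) (MM y1 y2)) (MM x1 x2)) (Dg c)) (Dg b))"
    by simp
  thus ?thesis by (simp add: lin_lin split_def)
qed

lemma epsmult_lin: "lin (\<lambda>x. if eps x then F else 0) (MM b c) = (if eps b \<and> eps c then F else 0)"
proof -
  have "lin (\<lambda>x. if eps x then F else 0) (MM b c) = (\<Sum>x\<in>bmult A b c. if x = uu then F else 0)"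
    by (simp add: lin_def eps_iff)
  also have "\<dots> = (if uu \<in> bmult A b c then F else 0)"
    by (simp add: sum.delta)
  also have "uu \<in> bmult A b c \<longleftrightarrow> eps b \<and> eps c"
  proof -
    have "{x \<in> bmult A b c. eps x} = (if uu \<in> bmult A b c then {uu} else {})"
      using eps_iff by auto
    thus ?thesis using ax_epsmult[of b c] by (auto split: if_splits)
  qed
  finally show ?thesis .
qed

end

definition hom :: "nat \<Rightarrow> 'a list fz \<Rightarrow> bool" where
  "hom n U \<longleftrightarrow> (\<forall>u\<in>elts U. length u = n)"

lemma elts_sum_subset: "elts (sum f S) \<subseteq> (\<Union>s\<in>S. elts (f s))"
proof (induction S rule: infinite_finite_induct)
  case (insert x F)
  thus ?case by (auto simp: elts_plus zadd_def)
qed auto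

lemma elts_lin_subset: "elts (lin f X) \<subseteq> (\<Union>x\<in>elts X. elts (f x))"
  unfolding lin_def by (rule elts_sum_subset)

lemma if_one_mult[simp]: "(if P then 1 else 0) * (x::'a::ring_1) = (if P then x else 0)" by (cases P) simp_all
lemma mult_if_one[simp]: "(x::'a::ring_1) * (if P then 1 else 0) = (if P then x else 0)" by (cases P) simp_all

lemma hom_sum: "(\<And>x. x \<in> S \<Longrightarrow> hom n (f x)) \<Longrightarrow> hom n (sum f S)"
proof -
  assume h: "\<And>x. x \<in> S \<Longrightarrow> hom n (f x)"
  show "hom n (sum f S)" unfolding hom_def
  proof
    fix u assume "u \<in> elts (sum f S)"
    then obtain x where "x \<in> S" "u \<in> elts (f x)" using elts_sum_subset[of f S] by auto
    thus "length u = n" using h unfolding hom_def by auto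
  qed
qed
lemma hom_lin: "(\<And>x. x \<in> elts X \<Longrightarrow> hom n (f x)) \<Longrightarrow> hom n (lin f X)"
  unfolding lin_def by (rule hom_sum)
lemma hom_add: "hom n U \<Longrightarrow> hom n V \<Longrightarrow> hom n (U + V)"
  unfolding hom_def by (auto simp: elts_plus zadd_def)
lemma hom_zero[simp]: "hom n 0" unfolding hom_def by simp
lemma hom_bas[simp]: "hom n (bas w) \<longleftrightarrow> length w = n" unfolding hom_def by simp
lemma hom_one[simp]: "hom 0 (1 :: 'a list fz)" by (simp add: bas_Nil[symmetric])
lemma hom_mult: "hom m U \<Longrightarrow> hom n V \<Longrightarrow> hom (m + n) (U * V)"
proof -
  assume hU: "hom m U" and hV: "hom n V"
  have "U * V = lin (\<lambda>v. lin (\<lambda>w. bas (v * w)) V) U" by (simp add: times_fz_def)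
  moreover have "\<And>v. v \<in> elts U \<Longrightarrow> hom (m + n) (lin (\<lambda>w. bas (v * w)) V)"
  proof -
    fix v assume v: "v \<in> elts U"
    show "hom (m + n) (lin (\<lambda>w. bas (v * w)) V)"
    proof (rule hom_lin)
      fix w assume "w \<in> elts V"
      thus "hom (m + n) (bas (v * w))" using v hU hV by (simp add: hom_def times_list_def)
    qed
  qed
  ultimately show ?thesis by (simp add: hom_lin)
qed
lemma hom_elts: "hom n U \<Longrightarrow> u \<in> elts U \<Longrightarrow> length u = n" unfolding hom_def by blast

definition sA :: "'b fz \<Rightarrow> 'b list fz" where "sA X = lin (\<lambda>x. bas [x]) X"

lemma hom_sA[simp]: "hom (Suc 0) (sA X)" unfolding sA_def by (auto intro!: hom_lin)
lemma sA_bas[simp]: "sA (bas x) = bas [x]" by (simp add: sA_def)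
lemma sA_add[simp]: "sA (X + Y) = sA X + sA Y" by (simp add: sA_def)
lemma sA_lin: "sA (lin f X) = lin (\<lambda>x. sA (f x)) X" by (simp add: sA_def lin_lin)
lemma sA_zero[simp]: "sA 0 = 0" by (simp add: sA_def)

lemma mlin_bas_sA: "mlin bas Ys = prod_list (map sA Ys)"
proof (induction Ys)
  case Nil thus ?case by (simp add: bas_Nil)
next
  case (Cons Y Ys)
  have "mlin bas (Y # Ys) = lin (\<lambda>y. mlin (\<lambda>ys. bas [y] * bas ys) Ys) Y"
    by (simp add: bas_Cons[symmetric])
  also have "\<dots> = lin (\<lambda>y. bas [y] * mlin bas Ys) Y" by (simp only: mlin_mult_left)
  also have "\<dots> = sA Y * mlin bas Ys" by (simp add: lin_mult_right sA_def)
  finally show ?case using Cons by simp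
qed

lemma Zv_listset: "(\<And>B. B \<in> set As \<Longrightarrow> finite B) \<Longrightarrow> Zv (listset As) = prod_list (map (\<lambda>B. sA (Zv B)) As)"
proof -
  assume f: "\<And>B. B \<in> set As \<Longrightarrow> finite B"
  have "Zv (listset As) = (\<Sum>xs\<in>listset As. bas xs)" using f by (simp add: sum_bas finite_listset)
  also have "\<dots> = mlin bas (map Zv As)" using f by (rule sum_listset_mlin)
  also have "\<dots> = prod_list (map (\<lambda>B. sA (Zv B)) As)" by (simp add: mlin_bas_sA o_def)
  finally show ?thesis .
qed

context cdgb
begin

definition Dl :: "nat \<Rightarrow> 'b \<Rightarrow> 'b list fz" where "Dl n b = Zv (diag_iter A n b)"

lemma diag_iter_cases: obtains "n = 0" | "n = Suc 0" | m where "n = Suc (Suc m)"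
  by (metis not0_implies_Suc)

lemma finite_diag_iter[simp]: "finite (diag_iter A n b)"
proof (induction n arbitrary: b rule: less_induct)
  case (less n)
  show ?case
  proof (cases n rule: diag_iter_cases)
    case (3 m)
    thus ?thesis using less[of "Suc m"] by (auto intro!: finite_zsum)
  qed auto
qed

lemma length_diag_iter: "cs \<in> diag_iter A n b \<Longrightarrow> length cs = n"
proof (induction n arbitrary: b cs rule: less_induct)
  case (less n)
  show ?case
  proof (cases n rule: diag_iter_cases)
    case (3 m)
    from less.prems 3 have "cs \<in> zsum (\<lambda>(x, y). zsum (\<lambda>l. {l @ [y]}) (diag_iter A (Suc m) x)) (bdiag A b)"
      by simp
    from zsum_subset[THEN subsetD, OF this] obtain x y where
      "cs \<in> zsum (\<lambda>l. {l @ [y]}) (diag_iter A (Suc m) x)" by auto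
    from zsum_subset[THEN subsetD, OF this] obtain l where
      "l \<in> diag_iter A (Suc m) x" "cs = l @ [y]" by auto
    thus ?thesis using less.IH[of "Suc m"] 3 by simp
  qed (use less.prems in \<open>auto split: if_splits\<close>)
qed

lemma hom_Dl[simp]: "hom n (Dl n b)"
  unfolding hom_def Dl_def using length_diag_iter by simp

lemma Dl_0: "Dl 0 b = (if eps b then 1 else 0)"
  by (simp add: Dl_def bas_Nil[symmetric])
lemma Dl_1: "Dl (Suc 0) b = bas [b]"
  by (simp add: Dl_def)
lemma Dl_SS: "Dl (Suc (Suc n)) b = lin (\<lambda>(x, y). Dl (Suc n) x * bas [y]) (Dg b)"
proof -
  have "Dl (Suc (Suc n)) b = Zv (zsum (\<lambda>(x, y). zsum (\<lambda>l. {l @ [y]}) (diag_iter A (Suc n) x)) (bdiag A b))"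
    by (simp add: Dl_def)
  also have "\<dots> = lin (\<lambda>(x, y). lin (\<lambda>l. bas (l @ [y])) (Dl (Suc n) x)) (Dg b)"
    by (simp add: Zv_zsum_fin finite_zsum split_def Dl_def)
  also have "\<dots> = lin (\<lambda>(x, y). Dl (Suc n) x * bas [y]) (Dg b)"
    by (simp add: bas_append lin_mult_right)
  finally show ?thesis .
qed

lemma Dl_Suc: "Dl (Suc n) b = lin (\<lambda>(x, y). Dl n x * bas [y]) (Dg b)"
proof (cases n)
  case 0
  have "lin (\<lambda>(x, y). Dl 0 x * bas [y]) (Dg b) = lin (\<lambda>(x, y). if eps x then bas [y] else 0) (Dg b)"
    by (simp add: Dl_0 split_def)
  also have "\<dots> = bas [b]" by (rule counitL_lin)
  finally show ?thesis using 0 by (simp add: Dl_1)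
next
  case (Suc m) thus ?thesis by (simp add: Dl_SS)
qed

lemma Dl_split: "Dl (m + n) b = lin (\<lambda>(x, y). Dl m x * Dl n y) (Dg b)"
proof (induction n arbitrary: b)
  case 0
  have "lin (\<lambda>(x, y). Dl m x * Dl 0 y) (Dg b) = lin (\<lambda>(x, y). if eps y then Dl m x else 0) (Dg b)"
    by (simp add: Dl_0 split_def)
  also have "\<dots> = Dl m b" by (rule counitR_lin)
  finally show ?case by simp
next
  case (Suc k)
  have "Dl (m + Suc k) b = lin (\<lambda>(x, y). Dl (m + k) x * bas [y]) (Dg b)"
    by (simp only: add_Suc_right Dl_Suc)
  also have "\<dots> = lin (\<lambda>(x, y). lin (\<lambda>(u, v). Dl m u * Dl k v * bas [y]) (Dg x)) (Dg b)"
  proof (rule lin_cong)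
    fix p assume "p \<in> elts (Dg b)"
    obtain x y where p: "p = (x, y)" by (cases p)
    show "(case p of (x, y) \<Rightarrow> Dl (m + k) x * bas [y]) = (case p of (x, y) \<Rightarrow> lin (\<lambda>(u, v). Dl m u * Dl k v * bas [y]) (Dg x))"
      unfolding p by (simp only: prod.case Suc.IH mult_lin_left split_def)
  qed
  also have "\<dots> = lin (\<lambda>(x, y). lin (\<lambda>(u, v). Dl m x * Dl k u * bas [v]) (Dg y)) (Dg b)"
    by (rule coassoc_lin)
  also have "\<dots> = lin (\<lambda>(x, y). Dl m x * Dl (Suc k) y) (Dg b)"
  proof (rule lin_cong)
    fix p assume "p \<in> elts (Dg b)"
    obtain x y where p: "p = (x, y)" by (cases p)
    show "(case p of (x, y) \<Rightarrow> lin (\<lambda>(u, v). Dl m x * Dl k u * bas [v]) (Dg y)) = (case p of (x, y) \<Rightarrow> Dl m x * Dl (Suc k) y)"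
      unfolding p by (simp add: Dl_Suc[of k y] mult_lin_right split_def mult.assoc)
  qed
  finally show ?case .
qed

lemma Dl_uu: "Dl n uu = bas (replicate n uu)"
proof (induction n)
  case 0 thus ?case by (simp add: Dl_0 eps_one bas_Nil)
next
  case (Suc n)
  have "Dl (Suc n) uu = Dl n uu * bas [uu]" by (simp add: Dl_Suc Dg_one)
  thus ?case using Suc by (simp add: bas_append[symmetric] replicate_append_same)
qed


section \<open>componentwise product\<close>

definition cm :: "'b list \<Rightarrow> 'b list \<Rightarrow> 'b list fz" where
  "cm cs w = (if length cs = length w then prod_list (map2 (\<lambda>c b. sA (MM c b)) cs w) else 0)"

lemma cm_Nil[simp]: "cm [] [] = 1" by (simp add: cm_def)
lemma cm_Cons[simp]: "cm (c # cs) (b # w) = sA (MM c b) * cm cs w" by (simp add: cm_def)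
lemma cm_Nil_Cons[simp]: "cm [] (b # w) = 0" "cm (c # cs) [] = 0" by (simp_all add: cm_def)
lemma cm_len: "length cs \<noteq> length w \<Longrightarrow> cm cs w = 0" by (simp add: cm_def)

lemma cm_append: "length u1 = length w1 \<Longrightarrow> cm (u1 @ u2) (w1 @ w2) = cm u1 w1 * cm u2 w2"
proof (induction u1 arbitrary: w1)
  case Nil thus ?case by simp
next
  case (Cons c u1)
  then obtain b w1' where "w1 = b # w1'" "length u1 = length w1'" by (cases w1) auto
  thus ?case using Cons.IH by (simp add: mult.assoc)
qed

lemma hom_cm[simp]: "hom (length w) (cm cs w)"
proof (induction w arbitrary: cs)
  case Nil thus ?case by (cases cs) (auto simp: cm_def)
next
  case (Cons b w)
  thus ?case
  proof (cases cs)
    case (Cons c cs')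
    thus ?thesis using hom_mult[OF hom_sA Cons.IH[of cs']] by simp
  qed simp
qed

lemma Zv_listset_map2: "length cs = length w \<Longrightarrow> Zv (listset (map2 (bmult A) cs w)) = cm cs w"
proof -
  assume l: "length cs = length w"
  have "Zv (listset (map2 (bmult A) cs w)) = prod_list (map (\<lambda>B. sA (Zv B)) (map2 (bmult A) cs w))"
    by (rule Zv_listset) (auto dest: set_zip_leftD set_zip_rightD)
  also have "\<dots> = cm cs w" using l by (simp add: cm_def o_def split_def)
  finally show ?thesis .
qed

definition odot :: "'b list fz \<Rightarrow> 'b list fz \<Rightarrow> 'b list fz" where
  "odot U W = lin (\<lambda>u. lin (\<lambda>w. cm u w) W) U"

lemma odot_bas[simp]: "odot (bas u) (bas w) = cm u w" by (simp add: odot_def)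
lemma odot_lin_left: "odot (lin f X) W = lin (\<lambda>x. odot (f x) W) X"
  by (simp add: odot_def lin_lin)
lemma odot_lin_right: "odot U (lin f X) = lin (\<lambda>x. odot U (f x)) X"
  unfolding odot_def by (simp add: lin_lin lin_swap[of _ X])
lemma odot_add_left[simp]: "odot (U + V) W = odot U W + odot V W" by (simp add: odot_def)
lemma odot_add_right[simp]: "odot U (V + W) = odot U V + odot U W" by (simp add: odot_def lin_fadd)
lemma odot_zero[simp]: "odot 0 W = 0" "odot U 0 = 0" by (simp_all add: odot_def)
lemma odot_bas_left: "odot (bas u) W = lin (\<lambda>w. cm u w) W" by (simp add: odot_def)
lemma odot_bas_right: "odot U (bas w) = lin (\<lambda>u. cm u w) U" by (simp add: odot_def)
lemma odot_sum_left: "odot (sum f S) W = (\<Sum>s\<in>S. odot (f s) W)"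
  by (induction S rule: infinite_finite_induct) auto
lemma odot_sum_right: "odot W (sum f S) = (\<Sum>s\<in>S. odot W (f s))"
  by (induction S rule: infinite_finite_induct) auto

lemma odot_mismatch: "hom n X \<Longrightarrow> hom k Y \<Longrightarrow> n \<noteq> k \<Longrightarrow> odot X Y = 0"
  unfolding odot_def
  by (rule trans[OF lin_cong lin_fzero], rule trans[OF lin_cong lin_fzero]) (auto simp: cm_len hom_def)

lemma hom_odot: "hom n W \<Longrightarrow> hom n (odot U W)"
  unfolding odot_def by (intro hom_lin) (metis hom_cm hom_def)

lemma mulL: "(X::'a::monoid_mult fz) * Y = lin (\<lambda>x. bas x * Y) X"
  by (metis lin_bas_id mult_lin_left)
lemma mulR: "(X::'a::monoid_mult fz) * Y = lin (\<lambda>y. X * bas y) Y"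
  by (metis lin_bas_id mult_lin_right)
lemma odL: "odot X Y = lin (\<lambda>x. odot (bas x) Y) X"
  by (metis lin_bas_id odot_lin_left)
lemma odR: "odot X Y = lin (\<lambda>y. odot X (bas y)) Y"
  by (metis lin_bas_id odot_lin_right)

lemma odot_mult:
  assumes h1: "hom m U1" and h2: "hom m W1"
  shows "odot (U1 * U2) (W1 * W2) = odot U1 W1 * odot U2 W2"
proof -
  have base: "odot (bas u1 * bas u2) (bas w1 * bas w2) = odot (bas u1) (bas w1) * odot (bas u2) (bas w2)"
    if "length u1 = m" "length w1 = m" for u1 u2 w1 w2
    using that by (simp add: bas_append[symmetric] cm_append)
  have s1: "odot (U1 * U2) (W1 * W2) = lin (\<lambda>u1. odot (bas u1 * U2) (W1 * W2)) U1"
    by (simp only: mulL[of U1 U2] odot_lin_left)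
  have s2: "odot U1 W1 * odot U2 W2 = lin (\<lambda>u1. odot (bas u1) W1 * odot U2 W2) U1"
    by (simp only: odL[of U1 W1] mult_lin_left)
  show ?thesis unfolding s1 s2
  proof (rule lin_cong)
    fix u1 assume u1: "u1 \<in> elts U1"
    have t1: "odot (bas u1 * U2) (W1 * W2) = lin (\<lambda>u2. odot (bas u1 * bas u2) (W1 * W2)) U2"
      by (simp only: mulR[of "bas u1" U2] odot_lin_left)
    have t2: "odot (bas u1) W1 * odot U2 W2 = lin (\<lambda>u2. odot (bas u1) W1 * odot (bas u2) W2) U2"
      by (simp only: odL[of U2 W2] mult_lin_right)
    show "odot (bas u1 * U2) (W1 * W2) = odot (bas u1) W1 * odot U2 W2"
      unfolding t1 t2
    proof (rule lin_cong)
      fix u2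
      have r1: "odot (bas u1 * bas u2) (W1 * W2) = lin (\<lambda>w1. odot (bas u1 * bas u2) (bas w1 * W2)) W1"
        by (simp only: mulL[of W1 W2] odot_lin_right)
      have r2: "odot (bas u1) W1 * odot (bas u2) W2 = lin (\<lambda>w1. odot (bas u1) (bas w1) * odot (bas u2) W2) W1"
        by (simp only: odR[of "bas u1" W1] mult_lin_left)
      show "odot (bas u1 * bas u2) (W1 * W2) = odot (bas u1) W1 * odot (bas u2) W2"
        unfolding r1 r2
      proof (rule lin_cong)
        fix w1 assume w1: "w1 \<in> elts W1"
        have q1: "odot (bas u1 * bas u2) (bas w1 * W2) = lin (\<lambda>w2. odot (bas u1 * bas u2) (bas w1 * bas w2)) W2"
          by (simp only: mulR[of "bas w1" W2] odot_lin_right)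
        have q2: "odot (bas u1) (bas w1) * odot (bas u2) W2 = lin (\<lambda>w2. odot (bas u1) (bas w1) * odot (bas u2) (bas w2)) W2"
          by (simp only: odR[of "bas u2" W2] mult_lin_right)
        show "odot (bas u1 * bas u2) (bas w1 * W2) = odot (bas u1) (bas w1) * odot (bas u2) W2"
          unfolding q1 q2
          by (rule lin_cong, rule base) (use u1 w1 h1 h2 in \<open>auto simp: hom_def\<close>)
      qed
    qed
  qed
qed


lemma odot_sA_letter: "odot (sA X) (bas [c]) = lin (\<lambda>x. sA (MM x c)) X"
  by (simp add: sA_def odot_lin_left)
lemma odot_letter_sA: "odot (bas [a]) (sA Y) = lin (\<lambda>y. sA (MM a y)) Y"
  by (simp add: sA_def odot_lin_right)

lemma sA_MM_assoc: "lin (\<lambda>x. sA (MM x c)) (MM a b) = lin (\<lambda>y. sA (MM a y)) (MM b c)"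
  unfolding sA_def by (rule assoc_lin)

lemma odot_assoc_bas: "odot (cm u v) (bas w) = odot (bas u) (cm v w)"
proof (induction u arbitrary: v w)
  case Nil
  show ?case
  proof (cases v)
    case Nil thus ?thesis by (cases w) (simp_all add: bas_Nil[symmetric])
  next
    case (Cons b v')
    have "odot (bas []) (cm v w) = 0"
    proof (cases "length v = length w")
      case True thus ?thesis using Cons by (intro odot_mismatch[of 0 _ "length w"]) auto
    next
      case False thus ?thesis by (simp add: cm_len)
    qed
    thus ?thesis using Cons by simp
  qed
next
  case (Cons a u')
  show ?case
  proof (cases v)
    case Nil
    have "odot (bas (a # u')) (cm [] w) = 0"
      by (cases w) (auto simp: bas_Nil[symmetric])
    thus ?thesis using Nil by simp
  next
    case (Cons b v')
    note vC = this
    show ?thesis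
    proof (cases w)
      case Nil
      have "odot (cm (a # u') v) (bas []) = 0"
        using vC hom_mult[OF hom_sA hom_cm[where cs="u'" and w="v'"]] by (intro odot_mismatch[of "length v" _ 0]) simp_all
      thus ?thesis using Nil vC by simp
    next
      case (Cons c w')
      note wC = this
      have "odot (cm (a # u') v) (bas w) = odot (sA (MM a b) * cm u' v') (bas [c] * bas w')"
        using vC wC by (simp add: bas_append[symmetric])
      also have "\<dots> = odot (sA (MM a b)) (bas [c]) * odot (cm u' v') (bas w')"
        by (rule odot_mult[of "Suc 0"]) auto
      also have "\<dots> = odot (bas [a]) (sA (MM b c)) * odot (bas u') (cm v' w')"
        by (simp add: odot_sA_letter odot_letter_sA sA_MM_assoc Cons.IH)
      also have "\<dots> = odot (bas [a] * bas u') (sA (MM b c) * cm v' w')"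
        by (rule odot_mult[of "Suc 0", symmetric]) auto
      also have "\<dots> = odot (bas (a # u')) (cm v w)"
        using vC wC by (simp add: bas_append[symmetric])
      finally show ?thesis .
    qed
  qed
qed

lemma odot_assoc: "odot (odot U V) W = odot U (odot V W)"
proof -
  have "odot (odot U V) W = lin (\<lambda>u. odot (odot (bas u) V) W) U"
    by (simp only: odL[of U V] odot_lin_left)
  also have "\<dots> = lin (\<lambda>u. odot (bas u) (odot V W)) U"
  proof (rule lin_cong)
    fix u
    have "odot (odot (bas u) V) W = lin (\<lambda>v. odot (odot (bas u) (bas v)) W) V"
      by (simp only: odR[of "bas u" V] odot_lin_left)
    also have "\<dots> = lin (\<lambda>v. odot (bas u) (odot (bas v) W)) V"
    proof (rule lin_cong)
      fix v
      have "odot (odot (bas u) (bas v)) W = lin (\<lambda>w. odot (cm u v) (bas w)) W"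
        by (simp only: odot_bas odR[of "cm u v" W])
      also have "\<dots> = lin (\<lambda>w. odot (bas u) (odot (bas v) (bas w))) W"
        by (simp add: odot_assoc_bas)
      also have "\<dots> = odot (bas u) (odot (bas v) W)"
        by (simp only: odR[of "bas v" W] odot_lin_right)
      finally show "odot (odot (bas u) (bas v)) W = odot (bas u) (odot (bas v) W)" .
    qed
    also have "\<dots> = odot (bas u) (odot V W)"
      by (simp only: odL[of V W] odot_lin_right)
    finally show "odot (odot (bas u) V) W = odot (bas u) (odot V W)" .
  qed
  also have "\<dots> = odot U (odot V W)"
    by (simp only: odL[of U "odot V W", symmetric])
  finally show ?thesis .
qed

lemma lin_eps_one: "lin (\<lambda>e. if eps e then 1 else 0) (MM x b) = (if eps x \<and> eps b then 1 else 0)"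
  by (rule epsmult_lin)

lemma Dl_odot: "odot (Dl n x) (Dl n b) = lin (Dl n) (MM x b)"
proof (induction n arbitrary: x b)
  case 0
  show ?case by (simp add: Dl_0 epsmult_lin bas_Nil[symmetric])
next
  case (Suc n)
  have "odot (Dl (Suc n) x) (Dl (Suc n) b)
      = lin (\<lambda>q. lin (\<lambda>p. odot (Dl n (fst p) * bas [snd p]) (Dl n (fst q) * bas [snd q])) (Dg x)) (Dg b)"
    by (simp add: Dl_Suc odot_lin_left odot_lin_right split_def)
  also have "\<dots> = lin (\<lambda>p. lin (\<lambda>q. odot (Dl n (fst p) * bas [snd p]) (Dl n (fst q) * bas [snd q])) (Dg b)) (Dg x)"
    by (rule lin_swap)
  also have "\<dots> = lin (\<lambda>(x1, y1). lin (\<lambda>(x2, y2). odot (Dl n x1 * bas [y1]) (Dl n x2 * bas [y2])) (Dg b)) (Dg x)"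
    by (simp add: split_def)
  also have "\<dots> = lin (\<lambda>(x1, y1). lin (\<lambda>(x2, y2). lin (Dl n) (MM x1 x2) * sA (MM y1 y2)) (Dg b)) (Dg x)"
    by (simp add: odot_mult[of n] Suc.IH split_def)
  also have "\<dots> = lin (\<lambda>(x1, y1). lin (\<lambda>(x2, y2). lin (\<lambda>u. lin (\<lambda>v. Dl n u * bas [v]) (MM y1 y2)) (MM x1 x2)) (Dg b)) (Dg x)"
    by (simp add: split_def lin_mult_left lin_mult_right sA_def)
  also have "\<dots> = lin (\<lambda>e. lin (\<lambda>(p, q). Dl n p * bas [q]) (Dg e)) (MM x b)"
    using multdiag_lin[of "\<lambda>(p, q). Dl n p * bas [q]" x b] by simp
  also have "\<dots> = lin (Dl (Suc n)) (MM x b)"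
    by (rule lin_cong) (simp add: Dl_Suc)
  finally show ?case .
qed

lemma cm_uu: "length w = n \<Longrightarrow> cm (replicate n uu) w = bas w"
proof (induction w arbitrary: n)
  case Nil thus ?case by (simp add: bas_Nil)
next
  case (Cons c w)
  thus ?case by (auto simp: bas_Cons[of c w] sA_bas)
qed

lemma odot_uu: "hom n U \<Longrightarrow> odot (Dl n uu) U = U"
proof -
  assume h: "hom n U"
  have "odot (Dl n uu) U = lin (\<lambda>u. cm (replicate n uu) u) U"
    by (simp add: Dl_uu odot_bas_left)
  also have "\<dots> = lin bas U"
    by (rule lin_cong) (use h in \<open>simp add: cm_uu hom_def\<close>)
  finally show ?thesis by simp
qed

definition dia :: "'b \<Rightarrow> 'b list \<Rightarrow> 'b list fz" where
  "dia a w = odot (Dl (length w) a) (bas w)"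

lemma finite_diamond[simp]: "finite (diamond A a w)"
  unfolding diamond_def by (intro finite_zsum finite_listset) (auto dest: set_zip_leftD set_zip_rightD)

lemma Zv_diamond: "Zv (diamond A a w) = dia a w"
proof -
  have "Zv (diamond A a w) = lin (\<lambda>cs. Zv (listset (map2 (bmult A) cs w))) (Dl (length w) a)"
    unfolding diamond_def Dl_def
    by (subst Zv_zsum_fin) (auto intro!: finite_listset dest: set_zip_leftD set_zip_rightD)
  also have "\<dots> = lin (\<lambda>cs. cm cs w) (Dl (length w) a)"
    by (rule lin_cong) (simp add: Zv_listset_map2 Dl_def length_diag_iter)
  also have "\<dots> = dia a w" by (simp add: dia_def odot_bas_right)
  finally show ?thesis .
qed

lemma hom_dia[simp]: "hom (length w) (dia a w)"
  unfolding dia_def by (simp add: hom_odot)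

definition Lw :: "'b \<Rightarrow> 'b list fz \<Rightarrow> 'b list fz" where "Lw a Y = lin (dia a) Y"
definition LA :: "'b fz \<Rightarrow> 'b list fz \<Rightarrow> 'b list fz" where "LA X Y = lin (\<lambda>a. Lw a Y) X"

lemma Lw_bas[simp]: "Lw a (bas w) = dia a w" by (simp add: Lw_def)
lemma Lw_add[simp]: "Lw a (X + Y) = Lw a X + Lw a Y" by (simp add: Lw_def)
lemma Lw_zero[simp]: "Lw a 0 = 0" by (simp add: Lw_def)
lemma Lw_lin: "Lw a (lin f X) = lin (\<lambda>x. Lw a (f x)) X" by (simp add: Lw_def lin_lin)
lemma Lw_sum: "Lw a (sum f S) = (\<Sum>s\<in>S. Lw a (f s))" by (simp add: Lw_def lin_sum)
lemma linear_Lw[simp]: "linear_fz (Lw a)" by (simp add: linear_fz_def)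
lemma LA_bas[simp]: "LA (bas a) Y = Lw a Y" by (simp add: LA_def)
lemma LA_add_left[simp]: "LA (X + X') Y = LA X Y + LA X' Y" by (simp add: LA_def)
lemma LA_add_right[simp]: "LA X (Y + Y') = LA X Y + LA X Y'" by (simp add: LA_def lin_fadd)
lemma LA_zero[simp]: "LA 0 Y = 0" "LA X 0 = 0" by (simp_all add: LA_def)
lemma LA_lin_left: "LA (lin f X) Y = lin (\<lambda>x. LA (f x) Y) X" by (simp add: LA_def lin_lin)
lemma LA_lin_right: "LA X (lin f Y) = lin (\<lambda>y. LA X (f y)) Y"
  by (simp add: LA_def Lw_lin lin_swap[of _ Y])
lemma linear_LA[simp]: "linear_fz (LA X)" by (simp add: linear_fz_def)

lemma hom_Lw: "hom n Y \<Longrightarrow> hom n (Lw a Y)"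
  unfolding Lw_def by (intro hom_lin) (metis hom_dia hom_def)

lemma Lw_hom: "hom n Y \<Longrightarrow> Lw a Y = odot (Dl n a) Y"
proof -
  assume h: "hom n Y"
  have "Lw a Y = lin (\<lambda>y. odot (Dl n a) (bas y)) Y"
    unfolding Lw_def dia_def by (rule lin_cong) (use h in \<open>simp add: hom_def\<close>)
  also have "\<dots> = odot (Dl n a) Y" by (simp only: odR[of _ Y, symmetric])
  finally show ?thesis .
qed

lemma Lw_1: "Lw a 1 = (if eps a then 1 else 0)"
  by (simp add: bas_Nil[symmetric] dia_def Dl_0)

lemma Lw_letter: "Lw a (bas [b]) = sA (MM a b)"
  by (simp add: dia_def Dl_1)

lemma Lw_uu: "Lw uu Y = Y"
proof -
  have "Lw uu Y = lin bas Y"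
    unfolding Lw_def dia_def
    by (rule lin_cong) (simp add: Dl_uu cm_uu)
  thus ?thesis by simp
qed

lemma dia_append: "dia a (v @ w) = lin (\<lambda>(x, y). dia x v * dia y w) (Dg a)"
proof -
  have "dia a (v @ w) = odot (lin (\<lambda>(x, y). Dl (length v) x * Dl (length w) y) (Dg a)) (bas v * bas w)"
    by (simp add: dia_def Dl_split bas_append)
  also have "\<dots> = lin (\<lambda>(x, y). odot (Dl (length v) x * Dl (length w) y) (bas v * bas w)) (Dg a)"
    by (simp add: odot_lin_left split_def)
  also have "\<dots> = lin (\<lambda>(x, y). dia x v * dia y w) (Dg a)"
    by (simp add: odot_mult[of "length v"] dia_def split_def)
  finally show ?thesis .
qed

lemma Lw_mult: "Lw a (Y1 * Y2) = lin (\<lambda>(x, y). Lw x Y1 * Lw y Y2) (Dg a)"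
proof -
  have "Lw a (Y1 * Y2) = lin (\<lambda>v. lin (\<lambda>w. dia a (v @ w)) Y2) Y1"
    by (simp add: times_fz_def Lw_lin times_list_def)
  also have "\<dots> = lin (\<lambda>v. lin (\<lambda>w. lin (\<lambda>p. dia (fst p) v * dia (snd p) w) (Dg a)) Y2) Y1"
    by (simp add: dia_append split_def)
  also have "\<dots> = lin (\<lambda>p. lin (\<lambda>v. lin (\<lambda>w. dia (fst p) v * dia (snd p) w) Y2) Y1) (Dg a)"
    by (simp add: lin_swap[of _ "Dg a"])
  also have "\<dots> = lin (\<lambda>(x, y). Lw x Y1 * Lw y Y2) (Dg a)"
    by (rule lin_cong) (simp only: Lw_def split_def mult_lin_left, simp only: mult_lin_right)
  finally show ?thesis .
qed

lemma Lw_assoc: "Lw x (Lw b Z) = LA (MM x b) Z"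
proof -
  have "Lw x (Lw b Z) = lin (\<lambda>z. Lw x (dia b z)) Z" by (simp add: Lw_def lin_lin)
  also have "\<dots> = lin (\<lambda>z. lin (\<lambda>e. dia e z) (MM x b)) Z"
  proof (rule lin_cong)
    fix z :: "'b list"
    let ?n = "length z"
    have "Lw x (dia b z) = odot (Dl ?n x) (dia b z)"
      by (rule Lw_hom) simp
    also have "\<dots> = odot (Dl ?n x) (odot (Dl ?n b) (bas z))"
      by (simp add: dia_def)
    also have "\<dots> = odot (lin (Dl ?n) (MM x b)) (bas z)"
      by (simp add: odot_assoc[symmetric] Dl_odot)
    also have "\<dots> = lin (\<lambda>e. dia e z) (MM x b)"
      by (simp add: odot_lin_left dia_def)
    finally show "Lw x (dia b z) = lin (\<lambda>e. dia e z) (MM x b)" .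
  qed
  also have "\<dots> = LA (MM x b) Z"
    by (simp add: LA_def Lw_def lin_swap[of _ Z])
  finally show ?thesis .
qed

end

lemma incseqs_0: "incseqs k 0 = (if k = 0 then {[]} else {})"
  unfolding incseqs_def by auto

lemma incseqs_Nil: "incseqs 0 n = {[]}"
  unfolding incseqs_def by auto

lemma finite_incseqs[simp]: "finite (incseqs k n)"
proof -
  have "incseqs k n \<subseteq> {xs. set xs \<subseteq> {..<n} \<and> length xs = k}"
    unfolding incseqs_def by auto
  thus ?thesis by (rule finite_subset) (simp add: finite_lists_length_eq)
qed

lemma incseqs_Suc_shift: "is \<in> incseqs k n \<longleftrightarrow> map Suc is \<in> incseqs k (Suc n)"
  unfolding incseqs_def by (auto simp: sorted_wrt_map)

lemma incseqs_Suc_zero: "is \<in> incseqs k n \<longleftrightarrow> 0 # map Suc is \<in> incseqs (Suc k) (Suc n)"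
  unfolding incseqs_def by (auto simp: sorted_wrt_map)

lemma incseqs_Suc:
  "incseqs k (Suc n) = map Suc ` incseqs k n \<union> (case k of 0 \<Rightarrow> {} | Suc k' \<Rightarrow> (\<lambda>is. 0 # map Suc is) ` incseqs k' n)"
proof (intro equalityI subsetI)
  fix "is" assume "is": "is \<in> incseqs k (Suc n)"
  hence len: "length is = k" and sw: "sorted_wrt (<) is" and sub: "set is \<subseteq> {..<Suc n}"
    unfolding incseqs_def by auto
  show "is \<in> map Suc ` incseqs k n \<union> (case k of 0 \<Rightarrow> {} | Suc k' \<Rightarrow> (\<lambda>is. 0 # map Suc is) ` incseqs k' n)"
  proof (cases "0 \<in> set is")
    case False
    hence e: "is = map Suc (map (\<lambda>i. i - 1) is)"
      by (induction "is") auto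
    hence "map (\<lambda>i. i - 1) is \<in> incseqs k n"
      using "is" incseqs_Suc_shift by metis
    thus ?thesis using e by blast
  next
    case True
    then obtain i0 rest where c: "is = i0 # rest" by (cases "is") auto
    have "i0 = 0"
    proof (rule ccontr)
      assume "i0 \<noteq> 0"
      hence "0 \<in> set rest" using True c by auto
      moreover have "\<forall>j\<in>set rest. i0 < j" using sw c by auto
      ultimately show False by auto
    qed
    have pos: "\<forall>j\<in>set rest. 0 < j" using sw c \<open>i0 = 0\<close> by auto
    hence e: "rest = map Suc (map (\<lambda>i. i - 1) rest)"
      by (induction rest) auto
    obtain k' where k: "k = Suc k'" using len c by (cases k) auto
    have "0 # map Suc (map (\<lambda>i. i - 1) rest) \<in> incseqs (Suc k') (Suc n)"
      using "is" c \<open>i0 = 0\<close> e k by simp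
    hence "map (\<lambda>i. i - 1) rest \<in> incseqs k' n" using incseqs_Suc_zero by blast
    thus ?thesis using c \<open>i0 = 0\<close> e k by force
  qed
next
  fix "is" assume "is \<in> map Suc ` incseqs k n \<union> (case k of 0 \<Rightarrow> {} | Suc k' \<Rightarrow> (\<lambda>is. 0 # map Suc is) ` incseqs k' n)"
  thus "is \<in> incseqs k (Suc n)"
    using incseqs_Suc_shift incseqs_Suc_zero by (cases k) auto
qed

context cdgb
begin

definition Gw :: "'b list \<Rightarrow> 'b list list \<Rightarrow> nat list \<Rightarrow> 'b list fz" where
  "Gw x ys is = prod_list (map (\<lambda>j. if j \<in> set is then dia (x ! j) (ys ! card {i \<in> set is. i < j}) else bas [x ! j]) [0..<length x])"

definition Ew :: "'b list \<Rightarrow> 'b list list \<Rightarrow> 'b list fz" where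
  "Ew x ys = (\<Sum>is\<in>incseqs (length ys) (length x). Gw x ys is)"

lemma prod_list_upt_Suc: "prod_list (map f [0..<Suc n]) = f 0 * prod_list (map (\<lambda>j. f (Suc j)) [0..<n])"
  by (simp add: upt_conv_Cons map_Suc_upt[symmetric] o_def del: upt_Suc)

lemma Suc_mem_image[simp]: "Suc j \<in> Suc ` S \<longleftrightarrow> j \<in> S" by auto

lemma card_shift: "card {i \<in> Suc ` set is. i < Suc j} = card {i \<in> set is. i < j}"
proof -
  have "{i \<in> Suc ` set is. i < Suc j} = Suc ` {i \<in> set is. i < j}" by auto
  thus ?thesis by (simp add: card_image)
qed

lemma card_shift0: "card {i \<in> insert 0 (Suc ` set is). i < Suc j} = Suc (card {i \<in> set is. i < j})"
proof -
  have "{i \<in> insert 0 (Suc ` set is). i < Suc j} = insert 0 (Suc ` {i \<in> set is. i < j})" by auto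
  thus ?thesis by (simp add: card_image)
qed

lemma Gw_Nil: "Gw x [] [] = bas x"
proof (induction x)
  case Nil thus ?case by (simp add: Gw_def bas_Nil)
next
  case (Cons a x)
  have "Gw (a # x) [] [] = bas [a] * Gw x [] []"
    by (simp add: Gw_def prod_list_upt_Suc del: upt_Suc)
  thus ?case using Cons by (simp add: bas_Cons[symmetric])
qed

lemma Gw_shift: "Gw (a # x) ys (map Suc is) = bas [a] * Gw x ys is"
  unfolding Gw_def by (simp add: prod_list_upt_Suc card_shift del: upt_Suc cong: if_cong)

lemma card_shift0': "card {i \<in> set (0 # map Suc is). i < Suc j} = Suc (card {i \<in> set is. i < j})"
  using card_shift0[of "is" j] by simp

lemma Gw_shift0: "Gw (a # x) (y # ys) (0 # map Suc is) = dia a y * Gw x ys is"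
proof -
  have pw: "(if Suc j \<in> set (0 # map Suc is) then dia ((a # x) ! Suc j) ((y # ys) ! card {i \<in> set (0 # map Suc is). i < Suc j}) else bas [(a # x) ! Suc j])
      = (if j \<in> set is then dia (x ! j) (ys ! card {i \<in> set is. i < j}) else bas [x ! j])" for j
    unfolding card_shift0' by simp
  show ?thesis
    unfolding Gw_def prod_list_upt_Suc length_Cons pw by simp
qed

lemma Ew_Nil2: "Ew x [] = bas x"
  by (simp add: Ew_def incseqs_Nil Gw_Nil)

lemma Ew_Nil1: "Ew [] (y # ys) = 0"
  by (simp add: Ew_def incseqs_0)

lemma Ew_Cons: "Ew (a # x) ys = bas [a] * Ew x ys + (case ys of [] \<Rightarrow> 0 | y # ys' \<Rightarrow> dia a y * Ew x ys')"
proof -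
  let ?k = "length ys" and ?n = "length x"
  have inj1: "inj_on (map Suc) (incseqs ?k ?n)" by (auto simp: inj_on_def)
  have inj2: "inj_on (\<lambda>is. 0 # map Suc is) S" for S :: "nat list set" by (auto simp: inj_on_def)
  have s1: "(\<Sum>is\<in>map Suc ` incseqs ?k ?n. Gw (a # x) ys is) = bas [a] * Ew x ys"
    by (simp add: sum.reindex[OF inj1] Gw_shift Ew_def sum_distrib_left)
  show ?thesis
  proof (cases ys)
    case Nil
    thus ?thesis by (simp add: Ew_Nil2 bas_Cons[of a x])
  next
    case (Cons y ys')
    have disj: "map Suc ` incseqs ?k ?n \<inter> (\<lambda>is. 0 # map Suc is) ` incseqs (length ys') ?n = {}" by auto
    have s2: "(\<Sum>is\<in>(\<lambda>is. 0 # map Suc is) ` incseqs (length ys') ?n. Gw (a # x) ys is) = dia a y * Ew x ys'"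
      using Cons by (simp add: sum.reindex[OF inj2] Gw_shift0 Ew_def sum_distrib_left)
    have "Ew (a # x) ys = (\<Sum>is\<in>map Suc ` incseqs ?k ?n \<union> (\<lambda>is. 0 # map Suc is) ` incseqs (length ys') ?n. Gw (a # x) ys is)"
      unfolding Ew_def using Cons by (simp add: incseqs_Suc)
    also have "\<dots> = bas [a] * Ew x ys + dia a y * Ew x ys'"
      by (subst sum.union_disjoint) (use disj s1 s2 in auto)
    finally show ?thesis using Cons by simp
  qed
qed

lemma Ew_Cons_Cons: "Ew (a # x) (y # ys) = bas [a] * Ew x (y # ys) + dia a y * Ew x ys"
  by (simp add: Ew_Cons)

lemma Ew_Nil1': "Ew [] ys = (if ys = [] then 1 else 0)"
  by (cases ys) (simp_all add: Ew_Nil2 Ew_Nil1 bas_Nil)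

lemma finite_E_word[simp]: "finite (E_word A x ys)"
  unfolding E_word_def
  by (auto intro!: finite_zsum finite_listset simp: finite_diamond)

lemma Zv_E_word: "Zv (E_word A x ys) = Ew x ys"
proof (cases "ys = []")
  case True thus ?thesis by (simp add: E_word_def Ew_Nil2)
next
  case False
  define F where "F = (\<lambda>is j. if j \<in> set is then diamond A (x ! j) (ys ! card {i \<in> set is. i < j}) else {[x ! j]})"
  have e: "E_word A x ys = zsum (\<lambda>is. zsum (\<lambda>cs. {concat cs}) (listset (map (F is) [0..<length x]))) (incseqs (length ys) (length x))"
    using False by (simp add: E_word_def F_def)
  have fF: "finite (F is j)" for "is" j by (simp add: F_def)
  have "Zv (E_word A x ys) = (\<Sum>is\<in>incseqs (length ys) (length x). Zv (zsum (\<lambda>cs. {concat cs}) (listset (map (F is) [0..<length x]))))"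
    unfolding e by (rule Zv_zsum) (auto intro!: finite_zsum finite_listset simp: fF)
  also have "\<dots> = (\<Sum>is\<in>incseqs (length ys) (length x). prod_list (map (\<lambda>j. Zv (F is j)) [0..<length x]))"
    by (rule sum.cong[OF refl], subst Zv_concat_listset) (auto simp: fF o_def)
  also have "\<dots> = Ew x ys"
    unfolding Ew_def Gw_def F_def by (rule sum.cong[OF refl]) (simp add: Zv_diamond if_distrib[of Zv] cong: if_cong)
  finally show ?thesis .
qed


lemma sum_atMost_Suc_shift': "(\<Sum>p\<le>Suc n. f p) = f 0 + (\<Sum>p\<le>n. f (Suc p))"
  by (rule sum.atMost_Suc_shift)

lemma Ew_append: "Ew (v @ w) ys = (\<Sum>p\<le>length ys. Ew v (take p ys) * Ew w (drop p ys))"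
proof (induction v arbitrary: ys)
  case Nil
  show ?case
  proof (cases ys)
    case Nil thus ?thesis by (simp add: Ew_Nil2 bas_Nil)
  next
    case (Cons y ys')
    have "(\<Sum>p\<le>length ys. Ew [] (take p ys) * Ew w (drop p ys)) = Ew w ys"
      using Cons by (simp add: sum_atMost_Suc_shift' Ew_Nil1' del: sum.atMost_Suc)
    thus ?thesis by simp
  qed
next
  case (Cons a v)
  have e1: "Ew ((a # v) @ w) ys = bas [a] * Ew (v @ w) ys + (case ys of [] \<Rightarrow> 0 | y # ys' \<Rightarrow> dia a y * Ew (v @ w) ys')"
    by (simp add: Ew_Cons)
  have e2: "(\<Sum>p\<le>length ys. Ew (a # v) (take p ys) * Ew w (drop p ys))
      = bas [a] * (\<Sum>p\<le>length ys. Ew v (take p ys) * Ew w (drop p ys))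
        + (\<Sum>p\<le>length ys. (case take p ys of [] \<Rightarrow> 0 | y # ys' \<Rightarrow> dia a y * Ew v ys') * Ew w (drop p ys))"
    by (simp add: Ew_Cons distrib_right sum.distrib sum_distrib_left mult.assoc)
  show ?case
  proof (cases ys)
    case Nil thus ?thesis using e1 e2 Cons.IH by simp
  next
    case (Cons y ys')
    have "(\<Sum>p\<le>length ys. (case take p ys of [] \<Rightarrow> 0 | y # ys' \<Rightarrow> dia a y * Ew v ys') * Ew w (drop p ys))
        = dia a y * (\<Sum>p\<le>length ys'. Ew v (take p ys') * Ew w (drop p ys'))"
      using Cons by (simp add: sum_atMost_Suc_shift' sum_distrib_left mult.assoc del: sum.atMost_Suc)
    thus ?thesis using e1 e2 Cons.IH Cons by simp
  qed
qed

definition EE :: "'b list fz \<Rightarrow> 'b list fz list \<Rightarrow> 'b list fz" where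
  "EE X Ys = lin (\<lambda>x. mlin (Ew x) Ys) X"

lemma Zv_E: "finite X \<Longrightarrow> (\<And>Y. Y \<in> set Ys \<Longrightarrow> finite Y) \<Longrightarrow> Zv (E A X Ys) = EE (Zv X) (map Zv Ys)"
  unfolding E_def EE_def
  by (simp add: Zv_zsum_fin finite_zsum finite_listset Zv_E_word lin_Zv sum_listset_mlin)

lemma EE_add[simp]: "EE (X + Y) Ys = EE X Ys + EE Y Ys" by (simp add: EE_def)
lemma EE_zero[simp]: "EE 0 Ys = 0" by (simp add: EE_def)
lemma EE_lin: "EE (lin f X) Ys = lin (\<lambda>x. EE (f x) Ys) X" by (simp add: EE_def lin_lin)
lemma EE_sum: "EE (sum f S) Ys = (\<Sum>s\<in>S. EE (f s) Ys)" by (simp add: EE_def lin_sum)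
lemma EE_bas: "EE (bas x) Ys = mlin (Ew x) Ys" by (simp add: EE_def)
lemma EE_Nil[simp]: "EE X [] = X" by (simp add: EE_def Ew_Nil2)
lemma EE_bas_bas: "EE (bas x) (map bas ys) = Ew x ys" by (simp add: EE_def mlin_bas)

lemma lin_mlin_swap: "lin (\<lambda>x. mlin (g x) Ys) X = mlin (\<lambda>ys. lin (\<lambda>x. g x ys) X) Ys"
proof (induction Ys arbitrary: g)
  case Nil thus ?case by simp
next
  case (Cons Y Ys)
  have "lin (\<lambda>x. mlin (g x) (Y # Ys)) X = lin (\<lambda>x. lin (\<lambda>y. mlin (\<lambda>ys. g x (y # ys)) Ys) Y) X" by simp
  also have "\<dots> = lin (\<lambda>y. lin (\<lambda>x. mlin (\<lambda>ys. g x (y # ys)) Ys) X) Y" by (rule lin_swap)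
  also have "\<dots> = lin (\<lambda>y. mlin (\<lambda>ys. lin (\<lambda>x. g x (y # ys)) X) Ys) Y"
    using Cons.IH by simp
  finally show ?case by simp
qed

lemma EE_mlin: "EE X Ys = mlin (\<lambda>ys. EE X (map bas ys)) Ys"
  unfolding EE_def by (simp add: mlin_bas lin_mlin_swap)

lemma EE_one: "EE 1 Ys = (if Ys = [] then 1 else 0)"
proof (cases Ys)
  case (Cons Y Ys')
  have "EE (bas []) Ys = 0" using Cons
    by (simp add: EE_def) (rule trans[OF lin_cong lin_fzero], simp add: Ew_Nil1)
  thus ?thesis using Cons by (simp add: bas_Nil)
qed simp

lemma EE_letter1: "EE (bas [a]) [Y] = Lw a Y"
  by (simp add: EE_def Ew_Cons Ew_Nil1 Ew_Nil2 bas_Nil Lw_def)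

lemma EE_letter2: "2 \<le> length Ys \<Longrightarrow> EE (bas [a]) Ys = 0"
proof -
  assume "2 \<le> length Ys"
  then obtain Y1 Y2 Ys' where c: "Ys = Y1 # Y2 # Ys'" by (metis One_nat_def Suc_1 Suc_le_length_iff)
  have "Ew [a] (y1 # y2 # ys') = 0" for y1 y2 ys' by (simp add: Ew_Cons Ew_Nil1)
  thus ?thesis using c by (simp add: EE_def)
qed

lemma EE_letter: "EE (bas [a]) Ys = (case Ys of [] \<Rightarrow> bas [a] | [Y] \<Rightarrow> Lw a Y | _ \<Rightarrow> 0)"
  by (cases Ys rule: remdups_adj.cases) (auto simp: EE_letter1 EE_letter2)

lemma EE_prod: "EE (X * Y) Ys = (\<Sum>p\<le>length Ys. EE X (take p Ys) * EE Y (drop p Ys))"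
proof -
  have "EE (X * Y) Ys = lin (\<lambda>x. lin (\<lambda>y. mlin (Ew (x @ y)) Ys) Y) X"
    by (simp add: times_fz_def EE_lin times_list_def EE_bas)
  also have "\<dots> = lin (\<lambda>x. lin (\<lambda>y. (\<Sum>p\<le>length Ys. mlin (Ew x) (take p Ys) * mlin (Ew y) (drop p Ys))) Y) X"
  proof -
    have "mlin (Ew (x @ y)) Ys = (\<Sum>p\<le>length Ys. mlin (Ew x) (take p Ys) * mlin (Ew y) (drop p Ys))" for x y
    proof -
      have "mlin (Ew (x @ y)) Ys = mlin (\<lambda>ys. \<Sum>p\<le>length Ys. Ew x (take p ys) * Ew y (drop p ys)) Ys"
        by (rule mlin_cong) (simp add: Ew_append)
      also have "\<dots> = (\<Sum>p\<le>length Ys. mlin (Ew x) (take p Ys) * mlin (Ew y) (drop p Ys))"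
        by (simp add: mlin_fsum mlin_split)
      finally show ?thesis .
    qed
    thus ?thesis by simp
  qed
  also have "\<dots> = (\<Sum>p\<le>length Ys. EE X (take p Ys) * EE Y (drop p Ys))"
    by (simp add: EE_def lin_fsum lin_mult_left lin_mult_right)
  finally show ?thesis .
qed

end

context cdgb
begin

lemma dia_letter[simp]: "dia a [b] = sA (MM a b)"
  using Lw_letter[of a b] by simp

lemma EE_letter_prod: "EE (bas [a] * Q) Ws = (case Ws of [] \<Rightarrow> bas [a] * Q | W # Ws' \<Rightarrow> bas [a] * EE Q Ws + Lw a W * EE Q Ws')"
proof (cases Ws)
  case Nil thus ?thesis by simp
next
  case (Cons W Ws')
  have z: "(\<Sum>p\<le>length Ws'. EE (bas [a]) (W # take p Ws') * EE Q (drop p Ws')) = Lw a W * EE Q Ws'"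
  proof (cases Ws')
    case Nil thus ?thesis by (simp add: EE_letter1)
  next
    case (Cons W2 Ws'')
    have "(\<Sum>p\<le>length Ws''. EE (bas [a]) (W # take (Suc p) Ws') * EE Q (drop (Suc p) Ws')) = 0"
      by (rule sum.neutral) (simp add: EE_letter2 Cons)
    thus ?thesis using Cons by (simp add: sum_atMost_Suc_shift' EE_letter1 del: sum.atMost_Suc)
  qed
  show ?thesis using Cons
    by (simp add: EE_prod sum_atMost_Suc_shift' z del: sum.atMost_Suc)
qed

lemma EE_sA_prod: "EE (sA X * Q) Ws = lin (\<lambda>c. EE (bas [c] * Q) Ws) X"
  by (simp add: sA_def mult_lin_left EE_lin)

lemma EE_Lw_bas: "EE (Lw a (bas y)) Ws = Lw a (EE (bas y) Ws)"
proof (induction y arbitrary: a Ws)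
  case Nil
  show ?case by (simp add: bas_Nil Lw_1 EE_one)
next
  case (Cons b y)
  have IH': "\<And>z Ws. EE (dia z y) Ws = Lw z (EE (bas y) Ws)" using Cons.IH by simp
  have L: "Lw a (bas (b # y)) = lin (\<lambda>(x, z). sA (MM x b) * Lw z (bas y)) (Dg a)"
    by (simp add: bas_Cons[of b y] Lw_mult Lw_letter)
  show ?case
  proof (cases Ws)
    case Nil thus ?thesis by simp
  next
    case (Cons W Ws')
    have "EE (Lw a (bas (b # y))) Ws
        = lin (\<lambda>(x, z). lin (\<lambda>c. bas [c] * EE (Lw z (bas y)) Ws + Lw c W * EE (Lw z (bas y)) Ws') (MM x b)) (Dg a)"
      unfolding L by (simp add: EE_lin split_def EE_sA_prod EE_letter_prod Cons)
    also have "\<dots> = lin (\<lambda>(x, z). sA (MM x b) * Lw z (EE (bas y) Ws) + LA (MM x b) W * Lw z (EE (bas y) Ws')) (Dg a)"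
      by (simp add: lin_fadd IH' split_def lin_mult_right sA_def LA_def)
    also have "\<dots> = lin (\<lambda>(x, z). Lw x (bas [b]) * Lw z (EE (bas y) Ws) + Lw x (Lw b W) * Lw z (EE (bas y) Ws')) (Dg a)"
      by (simp add: Lw_letter Lw_assoc)
    also have "\<dots> = Lw a (bas [b] * EE (bas y) Ws + Lw b W * EE (bas y) Ws')"
      by (simp add: Lw_mult lin_fadd split_def)
    also have "\<dots> = Lw a (EE (bas (b # y)) Ws)"
      by (simp add: bas_Cons[of b y] EE_letter_prod Cons)
    finally show ?thesis .
  qed
qed

lemma EE_Lw: "EE (Lw a Y) Ws = Lw a (EE Y Ws)"
proof -
  have "EE (Lw a (lin bas Y)) Ws = Lw a (EE (lin bas Y) Ws)"
    by (simp only: Lw_lin EE_lin EE_Lw_bas)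
  thus ?thesis by simp
qed

lemma EE_LA: "EE (LA X Y) Ws = LA X (EE Y Ws)"
  by (simp add: LA_def EE_lin EE_Lw)


section \<open>jac index combinatorics\<close>

lemma jprev_0[simp]: "jprev is ns 0 = 0" by (simp add: jprev_def)
lemma jprev_Suc[simp]: "jprev is ns (Suc j) = is ! j + ns ! j" by (simp add: jprev_def)

lemma jac_indexD:
  assumes "(is, ns) \<in> jac_index m n"
  shows "length is = m" "length ns = m" "\<And>j. j < m \<Longrightarrow> jprev is ns j \<le> is ! j" "jprev is ns m \<le> n"
  using assms unfolding jac_index_def by auto

lemma jprev_mono:
  assumes "(is, ns) \<in> jac_index m n" "j \<le> k" "k \<le> m"
  shows "jprev is ns j \<le> jprev is ns k"
  using assms(2,3)
proof (induction k)
  case 0 thus ?case by simp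
next
  case (Suc k)
  show ?case
  proof (cases "j = Suc k")
    case True thus ?thesis by simp
  next
    case False
    hence "jprev is ns j \<le> jprev is ns k" using Suc by simp
    also have "\<dots> \<le> is ! k" using jac_indexD(3)[OF assms(1)] Suc by simp
    also have "\<dots> \<le> jprev is ns (Suc k)" by simp
    finally show ?thesis .
  qed
qed

lemma jac_bounds:
  assumes "(is, ns) \<in> jac_index m n" "j < m"
  shows "is ! j \<le> n" "ns ! j \<le> n" "is ! j + ns ! j \<le> n"
proof -
  have "jprev is ns (Suc j) \<le> jprev is ns m" using jprev_mono[OF assms(1), of "Suc j" m] assms(2) by simp
  hence "is ! j + ns ! j \<le> n" using jac_indexD(4)[OF assms(1)] by simp
  thus "is ! j \<le> n" "ns ! j \<le> n" "is ! j + ns ! j \<le> n" by auto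
qed

lemma finite_jac_index[simp]: "finite (jac_index m n)"
proof -
  have "jac_index m n \<subseteq> {is. set is \<subseteq> {..n} \<and> length is = m} \<times> {ns. set ns \<subseteq> {..n} \<and> length ns = m}"
  proof
    fix q assume q: "q \<in> jac_index m n"
    obtain "is" ns where qq: "q = (is, ns)" by (cases q)
    have "set is \<subseteq> {..n}" "set ns \<subseteq> {..n}"
      using jac_bounds[OF q[unfolded qq]] jac_indexD(1,2)[OF q[unfolded qq]]
      by (auto simp: in_set_conv_nth)
    thus "q \<in> {is. set is \<subseteq> {..n} \<and> length is = m} \<times> {ns. set ns \<subseteq> {..n} \<and> length ns = m}"
      using jac_indexD(1,2)[OF q[unfolded qq]] qq by auto
  qed
  thus ?thesis by (rule finite_subset) (simp add: finite_lists_length_eq)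
qed

lemma jac_index_0: "jac_index 0 n = {([], [])}"
  unfolding jac_index_def by (auto simp: jprev_def)

lemma jprev_shift: "0 < j \<Longrightarrow> j \<le> length is \<Longrightarrow> jprev (map Suc is) ns j = Suc (jprev is ns j)"
  by (simp add: jprev_def)

lemma jac_shift_mem: "(map Suc is, ns) \<in> jac_index m (Suc n) \<longleftrightarrow> (is, ns) \<in> jac_index m n"
proof -
  have "jprev (map Suc is) ns j \<le> map Suc is ! j \<longleftrightarrow> jprev is ns j \<le> is ! j" if "j < length is" for j
    using that by (cases j) (auto simp: jprev_def)
  moreover have "jprev (map Suc is) ns (length is) \<le> Suc n \<longleftrightarrow> jprev is ns (length is) \<le> n"
    by (cases "length is") (auto simp: jprev_def)
  ultimately show ?thesis unfolding jac_index_def by auto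
qed

lemma jprev_zero: "0 < j \<Longrightarrow> j \<le> Suc (length is) \<Longrightarrow> jprev (0 # map (\<lambda>i. i + p) is) (p # ns) j = jprev is ns (j - 1) + p"
  by (cases j; cases "j - 1") (auto simp: jprev_def nth_Cons split: nat.splits)

lemma jac_zero_mem: "(0 # map (\<lambda>i. i + p) is, p # ns) \<in> jac_index (Suc m) n \<longleftrightarrow> p \<le> n \<and> (is, ns) \<in> jac_index m (n - p)"
proof
  assume a: "(0 # map (\<lambda>i. i + p) is, p # ns) \<in> jac_index (Suc m) n"
  have l: "length is = m" "length ns = m" using jac_indexD(1,2)[OF a] by auto
  have "jprev (0 # map (\<lambda>i. i + p) is) (p # ns) 1 \<le> jprev (0 # map (\<lambda>i. i + p) is) (p # ns) (Suc m)"
    using jprev_mono[OF a, of 1 "Suc m"] by simp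
  hence pn: "p \<le> n" using jac_indexD(4)[OF a] by simp
  have c: "jprev is ns j \<le> is ! j" if "j < m" for j
    using jac_indexD(3)[OF a, of "Suc j"] that l jprev_zero[of "Suc j" "is" p ns] by simp
  have "jprev is ns m + p \<le> n"
    using jac_indexD(4)[OF a] l jprev_zero[of "Suc m" "is" p ns] by simp
  thus "p \<le> n \<and> (is, ns) \<in> jac_index m (n - p)"
    using pn c l unfolding jac_index_def by auto
next
  assume a: "p \<le> n \<and> (is, ns) \<in> jac_index m (n - p)"
  hence l: "length is = m" "length ns = m" using jac_indexD(1,2) by auto
  have c: "jprev (0 # map (\<lambda>i. i + p) is) (p # ns) j \<le> (0 # map (\<lambda>i. i + p) is) ! j" if "j < Suc m" for j
  proof (cases j)
    case 0 thus ?thesis by simp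
  next
    case (Suc j')
    thus ?thesis using jac_indexD(3)[of "is" ns m "n - p" j'] a that l jprev_zero[of j "is" p ns] by simp
  qed
  have "jprev (0 # map (\<lambda>i. i + p) is) (p # ns) (Suc m) \<le> n"
    using jprev_zero[of "Suc m" "is" p ns] l jac_indexD(4)[of "is" ns m "n - p"] a by (simp add: le_diff_conv2)
  thus "(0 # map (\<lambda>i. i + p) is, p # ns) \<in> jac_index (Suc m) n"
    using c l unfolding jac_index_def by auto
qed

lemma jac_pos_image:
  assumes "0 < m"
  shows "{q \<in> jac_index m (Suc n). 0 < fst q ! 0} = (\<lambda>(is, ns). (map Suc is, ns)) ` jac_index m n"
proof (intro equalityI subsetI)
  fix q assume q: "q \<in> {q \<in> jac_index m (Suc n). 0 < fst q ! 0}"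
  obtain "is" ns where qq: "q = (is, ns)" by (cases q)
  have J: "(is, ns) \<in> jac_index m (Suc n)" and pos: "0 < is ! 0" using q qq by auto
  have l: "length is = m" using jac_indexD(1)[OF J] .
  have allpos: "0 < is ! j" if "j < m" for j
  proof (cases j)
    case 0 thus ?thesis using pos by simp
  next
    case (Suc j')
    have "jprev is ns 1 \<le> jprev is ns j" using jprev_mono[OF J, of 1 j] that Suc by simp
    also have "\<dots> \<le> is ! j" using jac_indexD(3)[OF J] that by simp
    finally show ?thesis using pos by simp
  qed
  have e: "is = map Suc (map (\<lambda>i. i - 1) is)"
    by (rule nth_equalityI) (use allpos l in auto)
  have "(map (\<lambda>i. i - 1) is, ns) \<in> jac_index m n"
    using J e jac_shift_mem by metis
  thus "q \<in> (\<lambda>(is, ns). (map Suc is, ns)) ` jac_index m n"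
    using qq e by (auto intro!: image_eqI[where x="(map (\<lambda>i. i - 1) is, ns)"])
next
  fix q assume "q \<in> (\<lambda>(is, ns). (map Suc is, ns)) ` jac_index m n"
  then obtain "is" ns where q: "q = (map Suc is, ns)" and J: "(is, ns) \<in> jac_index m n" by auto
  have "length is = m" using jac_indexD(1)[OF J] .
  thus "q \<in> {q \<in> jac_index m (Suc n). 0 < fst q ! 0}"
    using q J jac_shift_mem assms by auto
qed

lemma jac_pos_empty:
  assumes "0 < m"
  shows "{q \<in> jac_index m 0. 0 < fst q ! 0} = {}"
proof -
  have "fst q ! 0 = 0" if q: "q \<in> jac_index m 0" for q
    using jac_bounds(1)[of "fst q" "snd q" m 0 0] q assms by simp
  thus ?thesis by auto
qed

lemma jac_zero_image:
  "{q \<in> jac_index (Suc m) n. fst q ! 0 = 0}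
   = (\<lambda>(p, (is, ns)). (0 # map (\<lambda>i. i + p) is, p # ns)) ` (SIGMA p:{..n}. jac_index m (n - p))"
proof (intro equalityI subsetI)
  fix q assume q: "q \<in> {q \<in> jac_index (Suc m) n. fst q ! 0 = 0}"
  obtain is0 ns0 where qq: "q = (is0, ns0)" by (cases q)
  have J: "(is0, ns0) \<in> jac_index (Suc m) n" and z: "is0 ! 0 = 0" using q qq by auto
  obtain i0 "is" where i: "is0 = i0 # is" using jac_indexD(1)[OF J] by (cases is0) auto
  obtain p ns where nn: "ns0 = p # ns" using jac_indexD(2)[OF J] by (cases ns0) auto
  have i0: "i0 = 0" using z i by simp
  have l: "length is = m" "length ns = m" using jac_indexD(1,2)[OF J] i nn by auto
  have ge: "p \<le> is ! j" if "j < m" for j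
  proof -
    have "jprev is0 ns0 1 \<le> jprev is0 ns0 (Suc j)" using jprev_mono[OF J, of 1 "Suc j"] that by simp
    also have "\<dots> \<le> is0 ! Suc j" using jac_indexD(3)[OF J, of "Suc j"] that by simp
    finally show ?thesis using i nn i0 by simp
  qed
  have e: "is = map (\<lambda>i. i + p) (map (\<lambda>i. i - p) is)"
    by (rule nth_equalityI) (use ge l in auto)
  have mem: "(0 # map (\<lambda>i. i + p) (map (\<lambda>i. i - p) is), p # ns) \<in> jac_index (Suc m) n"
    using J i nn i0 e by simp
  hence "p \<le> n \<and> (map (\<lambda>i. i - p) is, ns) \<in> jac_index m (n - p)"
    using jac_zero_mem by blast
  thus "q \<in> (\<lambda>(p, (is, ns)). (0 # map (\<lambda>i. i + p) is, p # ns)) ` (SIGMA p:{..n}. jac_index m (n - p))"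
    using qq i nn i0 e by (auto intro!: image_eqI[where x="(p, (map (\<lambda>i. i - p) is, ns))"])
next
  fix q assume "q \<in> (\<lambda>(p, (is, ns)). (0 # map (\<lambda>i. i + p) is, p # ns)) ` (SIGMA p:{..n}. jac_index m (n - p))"
  then obtain p "is" ns where q: "q = (0 # map (\<lambda>i. i + p) is, p # ns)" and pn: "p \<le> n"
    and J: "(is, ns) \<in> jac_index m (n - p)" by auto
  thus "q \<in> {q \<in> jac_index (Suc m) n. fst q ! 0 = 0}"
    using jac_zero_mem by auto
qed

end

context cdgb
begin

definition jargs :: "'b list fz list \<Rightarrow> 'b list fz list \<Rightarrow> nat list \<Rightarrow> nat list \<Rightarrow> 'b list fz list" where
  "jargs Ys Zs is ns =
     concat (map (\<lambda>j. take (is ! j - jprev is ns j) (drop (jprev is ns j) Zs)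
                      @ [EE (Ys ! j) (take (ns ! j) (drop (is ! j) Zs))]) [0..<length Ys])
     @ drop (jprev is ns (length Ys)) Zs"

definition JAC :: "'b list fz \<Rightarrow> 'b list fz list \<Rightarrow> 'b list fz list \<Rightarrow> 'b list fz" where
  "JAC X Ys Zs = (\<Sum>q\<in>jac_index (length Ys) (length Zs). EE X (jargs Ys Zs (fst q) (snd q)))"

lemma jargs_Nil: "jargs [] Zs is ns = Zs"
  by (simp add: jargs_def)

lemma JAC_Nil: "JAC X [] Zs = EE X Zs"
  by (simp add: JAC_def jac_index_0 jargs_Nil)

lemma jargs_ne: "Ys \<noteq> [] \<Longrightarrow> jargs Ys Zs is ns \<noteq> []"
  by (cases Ys) (simp_all add: jargs_def upt_conv_Cons del: upt_Suc)

lemma jargs_shift: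
  assumes "length Ys = m" "0 < m" "length is = m"
  shows "jargs Ys (Z # Zs) (map Suc is) ns = Z # jargs Ys Zs is ns"
proof -
  obtain m' where m: "m = Suc m'" using assms(2) by (cases m) auto
  define f where "f = (\<lambda>j. take (is ! j - jprev is ns j) (drop (jprev is ns j) Zs)
                      @ [EE (Ys ! j) (take (ns ! j) (drop (is ! j) Zs))])"
  define f' where "f' = (\<lambda>j. take (map Suc is ! j - jprev (map Suc is) ns j) (drop (jprev (map Suc is) ns j) (Z # Zs))
                      @ [EE (Ys ! j) (take (ns ! j) (drop (map Suc is ! j) (Z # Zs)))])"
  have f0: "f' 0 = Z # f 0" using assms m by (simp add: f_def f'_def)
  have fj: "f' j = f j" if "j \<in> set [Suc 0..<m]" for j
  proof -
    have j: "0 < j" "j < m" using that by auto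
    thus ?thesis using assms by (simp add: f_def f'_def jprev_shift)
  qed
  have "map f' [0..<m] = (Z # f 0) # map f [Suc 0..<m]"
    using f0 fj m by (simp add: upt_conv_Cons del: upt_Suc)
  moreover have "map f [0..<m] = f 0 # map f [Suc 0..<m]"
    using m by (simp add: upt_conv_Cons del: upt_Suc)
  moreover have "drop (jprev (map Suc is) ns m) (Z # Zs) = drop (jprev is ns m) Zs"
    using assms by (simp add: jprev_shift)
  ultimately show ?thesis
    unfolding jargs_def f_def[symmetric] f'_def[symmetric] using assms(1) by simp
qed

lemma jargs_zero:
  assumes "length Ys' = m" "length is = m" "length ns = m"
  shows "jargs (Y # Ys') Zs (0 # map (\<lambda>i. i + p) is) (p # ns) = EE Y (take p Zs) # jargs Ys' (drop p Zs) is ns"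
proof -
  let ?is = "0 # map (\<lambda>i. i + p) is" and ?ns = "p # ns"
  define f where "f = (\<lambda>j. take (is ! j - jprev is ns j) (drop (jprev is ns j) (drop p Zs))
                      @ [EE (Ys' ! j) (take (ns ! j) (drop (is ! j) (drop p Zs)))])"
  define f' where "f' = (\<lambda>j. take (?is ! j - jprev ?is ?ns j) (drop (jprev ?is ?ns j) Zs)
                      @ [EE ((Y # Ys') ! j) (take (?ns ! j) (drop (?is ! j) Zs))])"
  have f0: "f' 0 = [EE Y (take p Zs)]" by (simp add: f'_def)
  have fj: "f' (Suc j) = f j" if "j \<in> set [0..<m]" for j
  proof -
    have j: "j < m" using that by auto
    have jp: "jprev ?is ?ns (Suc j) = jprev is ns j + p"
      using jprev_zero[of "Suc j" "is" p ns] j assms by simp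
    show ?thesis unfolding f_def f'_def jp using j assms by (simp add: add.commute)
  qed
  have "map f' [0..<Suc m] = [EE Y (take p Zs)] # map f [0..<m]"
  proof -
    have "map f' [0..<Suc m] = f' 0 # map (\<lambda>j. f' (Suc j)) [0..<m]"
      by (simp add: upt_conv_Cons map_Suc_upt[symmetric] del: upt_Suc)
    also have "map (\<lambda>j. f' (Suc j)) [0..<m] = map f [0..<m]"
      using fj by (rule map_cong[OF refl])
    finally show ?thesis using f0 by simp
  qed
  moreover have "drop (jprev ?is ?ns (Suc m)) Zs = drop (jprev is ns m) (drop p Zs)"
    using jprev_zero[of "Suc m" "is" p ns] assms by (simp add: add.commute)
  ultimately show ?thesis
    unfolding jargs_def f_def[symmetric] f'_def[symmetric] using assms(1) by simp
qed

lemma JAC_lin: "JAC (lin f X) Ys Zs = lin (\<lambda>x. JAC (f x) Ys Zs) X"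
  by (simp add: JAC_def EE_lin lin_fsum)

lemma EE_bas_Cons_args:
  "Ws \<noteq> [] \<Longrightarrow> EE (bas (a # x)) Ws = bas [a] * EE (bas x) Ws + Lw a (hd Ws) * EE (bas x) (tl Ws)"
  by (cases Ws) (simp_all add: bas_Cons[of a x] EE_letter_prod)

lemma JAC_bas_Nil: "Ys \<noteq> [] \<Longrightarrow> JAC (bas []) Ys Zs = 0"
  unfolding JAC_def by (rule sum.neutral) (simp add: bas_Nil EE_one jargs_ne)

lemma pre_jacobi_bas: "EE (EE (bas x) Ys) Zs = JAC (bas x) Ys Zs"
proof (induction x arbitrary: Ys Zs)
  case Nil
  show ?case
  proof (cases Ys)
    case Nil thus ?thesis by (simp add: JAC_Nil)
  next
    case (Cons Y Ys')
    thus ?thesis using JAC_bas_Nil[of Ys Zs] by (simp add: bas_Nil EE_one)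
  qed
next
  case (Cons a x)
  note IH = Cons.IH
  show ?case
  proof (cases Ys)
    case Nil thus ?thesis by (simp add: JAC_Nil)
  next
    case (Cons Y Ys')
    note YsC = this
    let ?m = "length Ys'" and ?n = "length Zs"
    let ?J = "jac_index (Suc ?m) ?n"
    define F where "F = (\<lambda>q. Lw a (hd (jargs Ys Zs (fst q) (snd q))) * EE (bas x) (tl (jargs Ys Zs (fst q) (snd q))))"
    have R1: "JAC (bas (a # x)) Ys Zs = bas [a] * JAC (bas x) Ys Zs + (\<Sum>q\<in>?J. F q)"
      unfolding JAC_def F_def using YsC
      by (simp add: EE_bas_Cons_args jargs_ne sum.distrib sum_distrib_left)
    have split: "?J = {q \<in> ?J. 0 < fst q ! 0} \<union> {q \<in> ?J. fst q ! 0 = 0}" by auto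
    have R2: "(\<Sum>q\<in>?J. F q) = (\<Sum>q\<in>{q \<in> ?J. 0 < fst q ! 0}. F q) + (\<Sum>q\<in>{q \<in> ?J. fst q ! 0 = 0}. F q)"
      by (subst split, rule sum.union_disjoint) auto
    have Zpart: "(\<Sum>q\<in>{q \<in> ?J. fst q ! 0 = 0}. F q)
        = (\<Sum>p\<le>?n. Lw a (EE Y (take p Zs)) * JAC (bas x) Ys' (drop p Zs))"
    proof -
      have inj: "inj_on (\<lambda>(p, (is, ns)). (0 # map (\<lambda>i. i + p) is, p # ns)) (SIGMA p:{..?n}. jac_index ?m (?n - p))"
        by (rule inj_onI) (auto simp: inj_on_def)
      have "(\<Sum>q\<in>{q \<in> ?J. fst q ! 0 = 0}. F q)
          = (\<Sum>r\<in>(SIGMA p:{..?n}. jac_index ?m (?n - p)). F ((\<lambda>(p, (is, ns)). (0 # map (\<lambda>i. i + p) is, p # ns)) r))"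
        unfolding jac_zero_image by (rule sum.reindex[OF inj, unfolded o_def])
      also have "\<dots> = (\<Sum>(p, q)\<in>(SIGMA p:{..?n}. jac_index ?m (?n - p)). F (0 # map (\<lambda>i. i + p) (fst q), p # snd q))"
        by (rule sum.cong[OF refl]) (auto simp: split_def)
      also have "\<dots> = (\<Sum>p\<le>?n. \<Sum>q\<in>jac_index ?m (?n - p). F (0 # map (\<lambda>i. i + p) (fst q), p # snd q))"
        by (rule sum.Sigma[symmetric]) auto
      also have "\<dots> = (\<Sum>p\<le>?n. \<Sum>q\<in>jac_index ?m (?n - p). Lw a (EE Y (take p Zs)) * EE (bas x) (jargs Ys' (drop p Zs) (fst q) (snd q)))"
      proof (rule sum.cong[OF refl], rule sum.cong[OF refl])
        fix p q assume q: "q \<in> jac_index ?m (?n - p)"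
        have l: "length (fst q) = ?m" "length (snd q) = ?m" using jac_indexD(1,2)[of "fst q" "snd q"] q by auto
        show "F (0 # map (\<lambda>i. i + p) (fst q), p # snd q) = Lw a (EE Y (take p Zs)) * EE (bas x) (jargs Ys' (drop p Zs) (fst q) (snd q))"
          unfolding F_def YsC using jargs_zero[OF refl l] by simp
      qed
      also have "\<dots> = (\<Sum>p\<le>?n. Lw a (EE Y (take p Zs)) * JAC (bas x) Ys' (drop p Zs))"
        by (simp add: JAC_def sum_distrib_left)
      finally show ?thesis .
    qed
    have Ppart: "(\<Sum>q\<in>{q \<in> ?J. 0 < fst q ! 0}. F q)
        = (case Zs of [] \<Rightarrow> 0 | Z # Zs' \<Rightarrow> Lw a Z * JAC (bas x) Ys Zs')"
    proof (cases Zs)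
      case Nil
      have e: "{q \<in> ?J. 0 < fst q ! 0} = {}" unfolding Nil list.size(3) by (rule jac_pos_empty) simp
      show ?thesis using Nil e by (simp only: list.size(3) sum.empty list.case)
    next
      case (Cons Z Zs')
      have inj: "inj_on (\<lambda>x. (map Suc (fst x), snd x)) (jac_index (Suc ?m) (length Zs'))"
        by (rule inj_onI) (auto simp: inj_on_def prod_eq_iff)
      have "(\<Sum>q\<in>{q \<in> ?J. 0 < fst q ! 0}. F q) = (\<Sum>q\<in>jac_index (Suc ?m) (length Zs'). F (map Suc (fst q), snd q))"
        using Cons jac_pos_image[of "Suc ?m" "length Zs'"]
        by (simp add: sum.reindex[OF inj] split_def o_def)
      also have "\<dots> = (\<Sum>q\<in>jac_index (Suc ?m) (length Zs'). Lw a Z * EE (bas x) (jargs Ys Zs' (fst q) (snd q)))"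
      proof (rule sum.cong[OF refl])
        fix q assume q: "q \<in> jac_index (Suc ?m) (length Zs')"
        have l: "length (fst q) = Suc ?m" using jac_indexD(1)[of "fst q" "snd q"] q by auto
        show "F (map Suc (fst q), snd q) = Lw a Z * EE (bas x) (jargs Ys Zs' (fst q) (snd q))"
          unfolding F_def using jargs_shift[of Ys "Suc ?m" "fst q" Z Zs' "snd q"] l YsC Cons by simp
      qed
      also have "\<dots> = Lw a Z * JAC (bas x) Ys Zs'"
        using YsC by (simp add: JAC_def sum_distrib_left)
      finally show ?thesis using Cons by simp
    qed
    have L: "EE (EE (bas (a # x)) Ys) Zs
        = EE (bas [a] * EE (bas x) Ys) Zs + (\<Sum>p\<le>?n. Lw a (EE Y (take p Zs)) * EE (EE (bas x) Ys') (drop p Zs))"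
    proof -
      have "EE (bas (a # x)) Ys = bas [a] * EE (bas x) Ys + Lw a Y * EE (bas x) Ys'"
        using YsC by (simp add: EE_bas_Cons_args)
      hence "EE (EE (bas (a # x)) Ys) Zs = EE (bas [a] * EE (bas x) Ys) Zs + EE (Lw a Y * EE (bas x) Ys') Zs"
        by simp
      also have "EE (Lw a Y * EE (bas x) Ys') Zs = (\<Sum>p\<le>?n. EE (Lw a Y) (take p Zs) * EE (EE (bas x) Ys') (drop p Zs))"
        by (rule EE_prod)
      finally show ?thesis by (simp only: EE_Lw)
    qed
    have L2: "EE (bas [a] * EE (bas x) Ys) Zs = bas [a] * JAC (bas x) Ys Zs + (case Zs of [] \<Rightarrow> 0 | Z # Zs' \<Rightarrow> Lw a Z * JAC (bas x) Ys Zs')"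
    proof (cases Zs)
      case Nil thus ?thesis using IH[of Ys "[]"] by simp
    next
      case (Cons Z Zs') thus ?thesis by (simp add: EE_letter_prod IH)
    qed
    show ?thesis
      using L L2 R1 R2 Zpart Ppart by (simp add: IH)
  qed
qed

lemma pre_jacobi: "EE (EE X Ys) Zs = JAC X Ys Zs"
proof -
  have "EE (EE (lin bas X) Ys) Zs = JAC (lin bas X) Ys Zs"
    by (simp only: EE_lin JAC_lin pre_jacobi_bas)
  thus ?thesis by simp
qed

end

context cdgb
begin

abbreviation u1 where "u1 \<equiv> bas [uu]"

definition dg :: "'b \<Rightarrow> 'b list fz" where
  "dg a = sA (dA a) + lin (\<lambda>(x, y). bas [x] * bas [y]) (Dg a) + bas [a] * u1 + u1 * bas [a]"

lemma finite_rdiag[simp]: "finite (rdiag A a)" by (simp add: rdiag_def)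
lemma finite_dgen[simp]: "finite (dgen A a)"
  unfolding dgen_def by (intro finite_zadd finite_zsum) auto

lemma Zv_rdiag: "Zv (rdiag A a) = Dg a + (bas (a, uu) + bas (uu, a))"
  by (simp add: rdiag_def Zv_zadd)

lemma Zv_dgen: "Zv (dgen A a) = dg a"
proof -
  have "Zv (dgen A a) = sA (dA a) + lin (\<lambda>(x, y). bas [x, y]) (Zv (rdiag A a))"
    unfolding dgen_def by (simp add: Zv_zadd finite_zsum Zv_zsum_fin sA_def split_def)
  also have "\<dots> = dg a"
    by (simp add: Zv_rdiag dg_def bas_append[symmetric] add.assoc)
  finally show ?thesis .
qed

definition Dw :: "'b list \<Rightarrow> 'b list fz" where
  "Dw w = (\<Sum>i<length w. bas (take i w) * dg (w ! i) * bas (drop (Suc i) w))"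

lemma finite_dO_word[simp]: "finite (dO_word A w)"
  by (simp add: dO_word_def finite_zsum)

lemma Zv_dO_word: "Zv (dO_word A w) = Dw w"
proof -
  have "Zv (dO_word A w) = (\<Sum>i<length w. lin (\<lambda>u. bas (take i w @ u @ drop (Suc i) w)) (dg (w ! i)))"
    unfolding dO_word_def by (simp add: Zv_zsum finite_zsum lin_Zv[symmetric] Zv_dgen)
  also have "\<dots> = Dw w"
    unfolding Dw_def by (simp add: bas_append mult_lin_left[symmetric] mult_lin_right[symmetric] mult.assoc)
  finally show ?thesis .
qed

lemma Dw_Nil[simp]: "Dw [] = 0" by (simp add: Dw_def)

lemma Dw_Cons: "Dw (a # w) = dg a * bas w + bas [a] * Dw w"
proof -
  have "Dw (a # w) = bas [] * dg a * bas w + (\<Sum>i<length w. bas (a # take i w) * dg (w ! i) * bas (drop (Suc i) w))"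
    unfolding Dw_def by (simp add: sum.lessThan_Suc_shift del: sum.lessThan_Suc)
  also have "\<dots> = dg a * bas w + bas [a] * Dw w"
    by (simp add: Dw_def bas_Nil bas_mult times_list_def sum_distrib_left mult.assoc[symmetric])
  finally show ?thesis .
qed

lemma Dw_append: "Dw (v @ w) = Dw v * bas w + bas v * Dw w"
proof (induction v)
  case Nil thus ?case by (simp add: bas_Nil)
next
  case (Cons a v)
  show ?case
    by (simp add: Dw_Cons Cons.IH bas_append distrib_left distrib_right mult.assoc bas_Cons[of a v])
qed

definition DO :: "'b list fz \<Rightarrow> 'b list fz" where "DO X = lin Dw X"

lemma Zv_dO: "finite X \<Longrightarrow> Zv (dO A X) = DO (Zv X)"
  unfolding dO_def DO_def by (simp add: Zv_zsum_fin Zv_dO_word)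

lemma DO_add[simp]: "DO (X + Y) = DO X + DO Y" by (simp add: DO_def)
lemma DO_zero[simp]: "DO 0 = 0" by (simp add: DO_def)
lemma DO_lin: "DO (lin f X) = lin (\<lambda>x. DO (f x)) X" by (simp add: DO_def lin_lin)
lemma DO_sum: "DO (sum f S) = (\<Sum>s\<in>S. DO (f s))" by (simp add: DO_def lin_sum)
lemma DO_bas: "DO (bas w) = Dw w" by (simp add: DO_def)
lemma DO_one[simp]: "DO 1 = 0" by (simp add: DO_def bas_Nil[symmetric])
lemma DO_letter: "DO (bas [a]) = dg a" by (simp add: DO_def Dw_Cons bas_Nil)


lemma DO_bas_mult: "DO (bas v * Y) = Dw v * Y + bas v * DO Y"
proof -
  have "DO (bas v * Y) = DO (lin (\<lambda>w. bas (v @ w)) Y)"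
    by (subst mulR) (simp add: bas_append)
  also have "\<dots> = lin (\<lambda>w. Dw v * bas w + bas v * Dw w) Y"
    by (simp add: DO_lin DO_bas Dw_append)
  also have "\<dots> = Dw v * Y + bas v * DO Y"
    by (simp add: lin_fadd lin_mult_left DO_def)
  finally show ?thesis .
qed

lemma DO_mult: "DO (X * Y) = DO X * Y + X * DO Y"
proof -
  have "DO (X * Y) = lin (\<lambda>v. DO (bas v * Y)) X"
    by (subst mulL) (simp add: DO_lin)
  also have "\<dots> = lin (\<lambda>v. Dw v * Y + bas v * DO Y) X"
    by (simp add: DO_bas_mult)
  also have "\<dots> = DO X * Y + X * DO Y"
    by (simp add: lin_fadd lin_mult_right DO_def)
  finally show ?thesis .
qed

lemma dg_alt: "dg a = sA (dA a) + lin (\<lambda>(x, y). bas [x] * bas [y]) (Dg a) + bas [a] * u1 + u1 * bas [a]"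
  by (rule dg_def)

section \<open>single letter homotopy\<close>

definition K :: "'b \<Rightarrow> 'b list fz \<Rightarrow> 'b list fz" where
  "K a Y = lin (\<lambda>(x, z). Lw x Y * bas [z] + bas [x] * Lw z Y) (Dg a)"

definition H :: "'b \<Rightarrow> 'b list fz \<Rightarrow> 'b list fz" where
  "H a Y = K a Y + Lw a Y * u1 + u1 * Lw a Y"

definition G :: "'b \<Rightarrow> 'b list fz \<Rightarrow> 'b list fz" where
  "G a Y = DO (Lw a Y) + LA (dA a) Y + Lw a (DO Y)"

lemma Lw_sA: "Lw a (sA Y) = lin (\<lambda>y. sA (MM a y)) Y"
  by (simp add: sA_def Lw_lin Lw_letter)

lemma LA_one: "LA X 1 = lin (\<lambda>c. if eps c then 1 else 0) X"
  by (simp add: LA_def Lw_1)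

lemma G_one: "G a 1 = 0"
proof -
  have "LA (dA a) 1 = 0"
    unfolding LA_one by (rule trans[OF lin_cong lin_fzero]) (use one_notin_bd eps_iff in auto)
  thus ?thesis by (simp add: G_def Lw_1)
qed

lemma H_one: "H a 1 = 0"
proof -
  have "K a 1 = lin (\<lambda>(x, z). if eps x then bas [z] else 0) (Dg a) + lin (\<lambda>(x, z). if eps z then bas [x] else 0) (Dg a)"
    by (simp add: K_def Lw_1 split_def lin_fadd[symmetric] cong: if_cong)
  also have "\<dots> = 0" by (simp add: counitL_lin counitR_lin)
  finally show ?thesis by (simp add: H_def Lw_1)
qed


lemma LA_mult_Dg: "LA (dA a) (Y1 * Y2) = lin (\<lambda>(x, y). LA (dA x) Y1 * Lw y Y2 + Lw x Y1 * LA (dA y) Y2) (Dg a)"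
proof -
  have "LA (dA a) (Y1 * Y2) = lin (\<lambda>c. lin (\<lambda>p. Lw (fst p) Y1 * Lw (snd p) Y2) (Dg c)) (dA a)"
    by (simp add: LA_def Lw_mult split_def)
  also have "\<dots> = lin (\<lambda>(x, y). lin (\<lambda>u. Lw u Y1 * Lw y Y2) (dA x) + lin (\<lambda>v. Lw x Y1 * Lw v Y2) (dA y)) (Dg a)"
    using coder_lin[of "\<lambda>p. Lw (fst p) Y1 * Lw (snd p) Y2" a] by simp
  also have "\<dots> = lin (\<lambda>(x, y). LA (dA x) Y1 * Lw y Y2 + Lw x Y1 * LA (dA y) Y2) (Dg a)"
    by (simp add: LA_def lin_mult_left lin_mult_right)
  finally show ?thesis .
qed

lemma G_mult: "G a (Y1 * Y2) = lin (\<lambda>(x, z). G x Y1 * Lw z Y2 + Lw x Y1 * G z Y2) (Dg a)"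
proof -
  have e1: "DO (Lw a (Y1 * Y2)) = lin (\<lambda>(x, z). DO (Lw x Y1) * Lw z Y2 + Lw x Y1 * DO (Lw z Y2)) (Dg a)"
    by (simp add: Lw_mult DO_lin DO_mult split_def)
  have e3: "Lw a (DO (Y1 * Y2)) = lin (\<lambda>(x, z). Lw x (DO Y1) * Lw z Y2 + Lw x Y1 * Lw z (DO Y2)) (Dg a)"
    by (simp add: DO_mult Lw_mult lin_fadd split_def)
  have "G a (Y1 * Y2) = lin (\<lambda>p. (DO (Lw (fst p) Y1) * Lw (snd p) Y2 + Lw (fst p) Y1 * DO (Lw (snd p) Y2))
        + (LA (dA (fst p)) Y1 * Lw (snd p) Y2 + Lw (fst p) Y1 * LA (dA (snd p)) Y2)
        + (Lw (fst p) (DO Y1) * Lw (snd p) Y2 + Lw (fst p) Y1 * Lw (snd p) (DO Y2))) (Dg a)"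
    unfolding G_def e1 e3 LA_mult_Dg by (simp add: lin_fadd split_def)
  also have "\<dots> = lin (\<lambda>(x, z). G x Y1 * Lw z Y2 + Lw x Y1 * G z Y2) (Dg a)"
    by (rule lin_cong) (simp add: G_def split_def algebra_simps)
  finally show ?thesis .
qed

lemma coassoc_lin': "lin (\<lambda>p. lin (\<lambda>q. f (fst q) (snd q) (snd p)) (Dg (fst p))) (Dg b)
   = lin (\<lambda>p. lin (\<lambda>q. (f (fst p) (fst q) (snd q) :: 'y fz)) (Dg (snd p))) (Dg b)"
  using coassoc_lin[of f b] by (simp add: split_def)

lemma K_mult: "K a (Y1 * Y2) = lin (\<lambda>(x, z). K x Y1 * Lw z Y2 + Lw x Y1 * K z Y2) (Dg a)"
proof -
  define T1 where "T1 = lin (\<lambda>p. lin (\<lambda>q. Lw (fst q) Y1 * bas [snd q] * Lw (snd p) Y2) (Dg (fst p))) (Dg a)"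
  define T2 where "T2 = lin (\<lambda>p. lin (\<lambda>q. bas [fst q] * Lw (snd q) Y1 * Lw (snd p) Y2) (Dg (fst p))) (Dg a)"
  define T3 where "T3 = lin (\<lambda>p. lin (\<lambda>q. Lw (fst p) Y1 * Lw (fst q) Y2 * bas [snd q]) (Dg (snd p))) (Dg a)"
  define T4 where "T4 = lin (\<lambda>p. lin (\<lambda>q. Lw (fst p) Y1 * bas [fst q] * Lw (snd q) Y2) (Dg (snd p))) (Dg a)"
  have R: "lin (\<lambda>(x, z). K x Y1 * Lw z Y2 + Lw x Y1 * K z Y2) (Dg a) = T1 + T2 + T3 + T4"
    unfolding T1_def T2_def T3_def T4_def K_def
    by (simp add: split_def lin_fadd mult_lin_right mult_lin_left distrib_left distrib_right mult.assoc add.assoc)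
  have L: "K a (Y1 * Y2) = lin (\<lambda>p. lin (\<lambda>q. Lw (fst q) Y1 * Lw (snd q) Y2 * bas [snd p]) (Dg (fst p))) (Dg a)
      + lin (\<lambda>p. lin (\<lambda>q. bas [fst p] * Lw (fst q) Y1 * Lw (snd q) Y2) (Dg (snd p))) (Dg a)"
    unfolding K_def by (simp add: Lw_mult split_def lin_fadd mult_lin_right mult_lin_left mult.assoc)
  have c14: "T1 = T4" unfolding T1_def T4_def
    using coassoc_lin'[of "\<lambda>u v w. Lw u Y1 * bas [v] * Lw w Y2" a] by simp
  have c2: "T2 = lin (\<lambda>p. lin (\<lambda>q. bas [fst p] * Lw (fst q) Y1 * Lw (snd q) Y2) (Dg (snd p))) (Dg a)"
    unfolding T2_def using coassoc_lin'[of "\<lambda>u v w. bas [u] * Lw v Y1 * Lw w Y2" a] by simp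
  have c3: "T3 = lin (\<lambda>p. lin (\<lambda>q. Lw (fst q) Y1 * Lw (snd q) Y2 * bas [snd p]) (Dg (fst p))) (Dg a)"
    unfolding T3_def using coassoc_lin'[of "\<lambda>u v w. Lw u Y1 * Lw v Y2 * bas [w]" a] by simp
  show ?thesis unfolding R L c14 c2 c3 by (simp add: algebra_simps)
qed

lemma H_mult: "H a (Y1 * Y2) = lin (\<lambda>(x, z). H x Y1 * Lw z Y2 + Lw x Y1 * H z Y2) (Dg a)"
proof -
  have "lin (\<lambda>(x, z). H x Y1 * Lw z Y2 + Lw x Y1 * H z Y2) (Dg a)
      = lin (\<lambda>(x, z). K x Y1 * Lw z Y2 + Lw x Y1 * K z Y2) (Dg a)
        + lin (\<lambda>(x, z). u1 * (Lw x Y1 * Lw z Y2)) (Dg a) + lin (\<lambda>(x, z). (Lw x Y1 * Lw z Y2) * u1) (Dg a)"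
    unfolding H_def by (simp add: lin_fadd[symmetric] split_def algebra_simps)
  also have "\<dots> = H a (Y1 * Y2)"
    by (simp add: H_def K_mult Lw_mult lin_mult_left lin_mult_right split_def)
  finally show ?thesis by simp
qed


lemma DO_sA: "DO (sA X) = lin dg X"
  by (simp add: sA_def DO_lin DO_letter)

lemma sA_mult_r: "lin (\<lambda>c. bas [c] * Z) X = sA X * Z"
  by (simp add: sA_def lin_mult_right)
lemma sA_mult_l: "lin (\<lambda>c. Z * bas [c]) X = Z * sA X"
  by (simp add: sA_def lin_mult_left)

lemma G_letter: "G a (bas [b]) = H a (bas [b])"
proof -
  define M2 where "M2 = lin (\<lambda>p. lin (\<lambda>q. sA (MM (fst p) (fst q)) * sA (MM (snd p) (snd q))) (Dg b)) (Dg a)"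
  have i: "lin (\<lambda>c. sA (dA c)) (MM a b) = lin (\<lambda>x. sA (MM x b)) (dA a) + lin (\<lambda>x. sA (MM a x)) (dA b)"
    using leib_lin[of "\<lambda>y. bas [y]" a b] by (simp add: sA_def)
  have M2e: "M2 = lin (\<lambda>p. lin (\<lambda>q. lin (\<lambda>u. lin (\<lambda>v. bas [u] * bas [v]) (MM (snd p) (snd q))) (MM (fst p) (fst q))) (Dg b)) (Dg a)"
    unfolding M2_def by (simp only: sA_def mult_lin_left, simp only: mult_lin_right)
  have ii: "lin (\<lambda>c. lin (\<lambda>(x, y). bas [x] * bas [y]) (Dg c)) (MM a b) = M2"
    using multdiag_lin[of "\<lambda>p. bas [fst p] * bas [snd p]" a b] M2e
    by (simp add: split_def)
  have DOpart: "DO (Lw a (bas [b])) = lin (\<lambda>x. sA (MM x b)) (dA a) + lin (\<lambda>x. sA (MM a x)) (dA b) + M2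
      + (sA (MM a b) * u1 + u1 * sA (MM a b))"
  proof -
    have "DO (Lw a (bas [b])) = lin dg (MM a b)" by (simp add: Lw_letter DO_sA)
    also have "\<dots> = lin (\<lambda>c. sA (dA c) + lin (\<lambda>(x, y). bas [x] * bas [y]) (Dg c) + bas [c] * u1 + u1 * bas [c]) (MM a b)"
      by (rule lin_cong) (simp add: dg_def)
    also have "\<dots> = lin (\<lambda>c. sA (dA c)) (MM a b) + lin (\<lambda>c. lin (\<lambda>(x, y). bas [x] * bas [y]) (Dg c)) (MM a b)
       + lin (\<lambda>c. bas [c] * u1) (MM a b) + lin (\<lambda>c. u1 * bas [c]) (MM a b)"
      by (simp only: lin_fadd)
    finally show ?thesis by (simp only: i ii sA_mult_r sA_mult_l add.assoc)
  qed
  have LApart: "LA (dA a) (bas [b]) = lin (\<lambda>x. sA (MM x b)) (dA a)"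
    by (simp add: LA_def Lw_letter)
  have M2': "Lw a (lin (\<lambda>p. bas [fst p] * bas [snd p]) (Dg b)) = M2"
    unfolding M2_def by (simp add: Lw_lin Lw_mult Lw_letter split_def lin_swap[of _ "Dg b"])
  have Lwpart: "Lw a (DO (bas [b])) = lin (\<lambda>x. sA (MM a x)) (dA b) + M2
      + lin (\<lambda>(p, q). sA (MM p b) * bas [q] + bas [p] * sA (MM q b)) (Dg a)"
    by (simp add: DO_letter dg_def Lw_sA M2' Lw_mult Lw_letter lin_fadd split_def add.assoc)
  have "G a (bas [b]) = sA (MM a b) * u1 + u1 * sA (MM a b) + lin (\<lambda>(p, q). sA (MM p b) * bas [q] + bas [p] * sA (MM q b)) (Dg a)"
    unfolding G_def DOpart LApart Lwpart by (simp add: algebra_simps)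
  also have "\<dots> = H a (bas [b])"
    by (simp add: H_def K_def Lw_letter algebra_simps)
  finally show ?thesis .
qed

lemma G_eq_H_bas: "G a (bas y) = H a (bas y)"
proof (induction y arbitrary: a)
  case Nil thus ?case by (simp add: bas_Nil G_one H_one)
next
  case (Cons b y)
  show ?case
    by (simp add: bas_Cons[of b y] G_mult H_mult G_letter Cons.IH)
qed

lemma G_lin: "G a (lin f X) = lin (\<lambda>x. G a (f x)) X"
  by (simp add: G_def Lw_lin DO_lin LA_lin_right lin_fadd)
lemma H_lin: "H a (lin f X) = lin (\<lambda>x. H a (f x)) X"
  by (simp add: H_def K_def Lw_lin lin_fadd split_def mult_lin_left mult_lin_right lin_swap[of _ X])

lemma G_eq_H: "G a Y = H a Y"
proof -
  have "G a (lin bas Y) = H a (lin bas Y)" by (simp only: G_lin H_lin G_eq_H_bas)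
  thus ?thesis by simp
qed


section \<open>homotopy formula (1)\<close>

definition Lhs :: "'b list fz \<Rightarrow> 'b list fz list \<Rightarrow> 'b list fz" where
  "Lhs P Ys = DO (EE P Ys) + EE (DO P) Ys + (\<Sum>i<length Ys. EE P (Ys[i := DO (Ys ! i)]))"

definition mrg :: "'b list fz list \<Rightarrow> nat \<Rightarrow> 'b list fz list" where
  "mrg Ys i = take i Ys @ [Ys ! i * Ys ! Suc i] @ drop (Suc (Suc i)) Ys"

definition Rr :: "'b list fz \<Rightarrow> 'b list fz list \<Rightarrow> 'b list fz" where
  "Rr P Ys = (if Ys = [] then 0 else hd Ys * EE P (tl Ys) + EE P (butlast Ys) * last Ys
              + (\<Sum>i<length Ys - 1. EE P (mrg Ys i)))"

lemma Lhs_Nil: "Lhs P [] = 0" by (simp add: Lhs_def)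
lemma Rr_Nil: "Rr P [] = 0" by (simp add: Rr_def)

lemma EE_sA: "EE (sA X) Ys = lin (\<lambda>c. EE (bas [c]) Ys) X"
  by (simp add: sA_def EE_lin)

lemma EE_two_letters: "EE (bas [x] * bas [z]) Ys =
   (case Ys of [] \<Rightarrow> bas [x] * bas [z] | [Y] \<Rightarrow> bas [x] * Lw z Y + Lw x Y * bas [z]
     | [Y1, Y2] \<Rightarrow> Lw x Y1 * Lw z Y2 | _ \<Rightarrow> 0)"
proof (cases Ys)
  case Nil thus ?thesis by simp
next
  case (Cons Y Ys')
  show ?thesis
  proof (cases Ys')
    case Nil thus ?thesis using Cons by (simp add: EE_letter_prod EE_letter1)
  next
    case (Cons Y2 Ys'')
    thus ?thesis using \<open>Ys = Y # Ys'\<close>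
      by (cases Ys'') (simp_all add: EE_letter_prod EE_letter1 EE_letter2)
  qed
qed

lemma EE_dg1: "EE (dg a) [Y] = LA (dA a) Y + H a Y + bas [a] * Y + Y * bas [a]"
proof -
  have "EE (dg a) [Y] = LA (dA a) Y + lin (\<lambda>p. bas [fst p] * Lw (snd p) Y + Lw (fst p) Y * bas [snd p]) (Dg a)
      + (bas [a] * Lw uu Y + Lw a Y * u1) + (u1 * Lw a Y + Lw uu Y * bas [a])"
    by (simp add: dg_def EE_sA EE_letter1 LA_def EE_lin split_def EE_two_letters)
  thus ?thesis by (simp add: Lw_uu H_def K_def algebra_simps split_def)
qed

lemma EE_dg2: "EE (dg a) [Y1, Y2] = Lw a (Y1 * Y2) + Lw a Y1 * Y2 + Y1 * Lw a Y2"
proof -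
  have "EE (dg a) [Y1, Y2] = lin (\<lambda>p. Lw (fst p) Y1 * Lw (snd p) Y2) (Dg a)
      + Lw a Y1 * Lw uu Y2 + Lw uu Y1 * Lw a Y2"
    by (simp add: dg_def EE_sA EE_letter2 EE_lin split_def EE_two_letters)
  thus ?thesis by (simp add: Lw_uu Lw_mult split_def)
qed

lemma EE_dg3: "3 \<le> length Ys \<Longrightarrow> EE (dg a) Ys = 0"
proof -
  assume l: "3 \<le> length Ys"
  then obtain Y1 Y2 Y3 Ys' where c: "Ys = Y1 # Y2 # Y3 # Ys'"
    by (cases Ys; cases "tl Ys"; cases "tl (tl Ys)") auto
  show ?thesis using c by (simp add: dg_def EE_sA EE_letter2 EE_lin split_def EE_two_letters)
qed

lemma Lhs_letter1: "Lhs (bas [a]) [Y] = bas [a] * Y + Y * bas [a]"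
proof -
  have "Lhs (bas [a]) [Y] = G a Y + (H a Y + bas [a] * Y + Y * bas [a])"
    by (simp add: Lhs_def EE_letter1 DO_letter EE_dg1 G_def algebra_simps)
  thus ?thesis by (simp add: G_eq_H)
qed

lemma Lhs_letter2: "Lhs (bas [a]) [Y1, Y2] = Lw a (Y1 * Y2) + Lw a Y1 * Y2 + Y1 * Lw a Y2"
  by (simp add: Lhs_def EE_letter2 DO_letter EE_dg2 numeral_2_eq_2 lessThan_Suc)

lemma EE_dg_prod: "EE (dg a * Q) (Y # Ys') = dg a * EE Q (Y # Ys') + EE (dg a) [Y] * EE Q Ys'
   + (case Ys' of [] \<Rightarrow> 0 | Y2 # Ys'' \<Rightarrow> EE (dg a) [Y, Y2] * EE Q Ys'')"
proof (cases Ys')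
  case Nil thus ?thesis by (simp add: EE_prod)
next
  case (Cons Y2 Ys'')
  have z: "(\<Sum>p\<le>length Ys''. EE (dg a) (Y # Y2 # take p Ys'') * EE Q (drop p Ys'')) = EE (dg a) [Y, Y2] * EE Q Ys''"
  proof (cases Ys'')
    case Nil thus ?thesis by simp
  next
    case (Cons Z Zs)
    have "(\<Sum>p\<le>length Zs. EE (dg a) (Y # Y2 # Z # take p Zs) * EE Q (drop p Zs)) = 0"
      by (rule sum.neutral) (simp add: EE_dg3)
    thus ?thesis using Cons by (simp add: sum_atMost_Suc_shift' del: sum.atMost_Suc)
  qed
  show ?thesis using Cons
    by (simp add: EE_prod sum_atMost_Suc_shift' z del: sum.atMost_Suc)
qed

lemma sum_update_Cons: "(\<Sum>i<length (Y # Ys'). F ((Y # Ys')[i := D ((Y # Ys') ! i)]))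
   = F (D Y # Ys') + (\<Sum>j<length Ys'. F (Y # Ys'[j := D (Ys' ! j)]))"
  by (simp add: sum.lessThan_Suc_shift del: sum.lessThan_Suc)

lemma Lhs_letter_prod: "Lhs (bas [a] * Q) (Y # Ys') = bas [a] * Lhs Q (Y # Ys') + Lw a Y * Lhs Q Ys'
    + Lhs (bas [a]) [Y] * EE Q Ys' + (case Ys' of [] \<Rightarrow> 0 | Y2 # Ys'' \<Rightarrow> Lhs (bas [a]) [Y, Y2] * EE Q Ys'')"
proof -
  have A: "(\<Sum>j<length Ys'. EE (bas [a] * Q) (Y # Ys'[j := DO (Ys' ! j)]))
      = bas [a] * (\<Sum>j<length Ys'. EE Q (Y # Ys'[j := DO (Ys' ! j)])) + Lw a Y * (\<Sum>j<length Ys'. EE Q (Ys'[j := DO (Ys' ! j)]))"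
    by (simp add: EE_letter_prod sum.distrib sum_distrib_left)
  have L1: "Lhs (bas [a]) [Y] = DO (Lw a Y) + EE (dg a) [Y] + Lw a (DO Y)"
    by (simp add: Lhs_def EE_letter1 DO_letter)
  have L2: "Ys' = Y2 # Ys'' \<Longrightarrow> Lhs (bas [a]) [Y, Y2] = EE (dg a) [Y, Y2]" for Y2 Ys''
    by (simp add: Lhs_def EE_letter2 DO_letter numeral_2_eq_2 lessThan_Suc)
  have S1: "(\<Sum>i<length (Y # Ys'). EE (bas [a] * Q) ((Y # Ys')[i := DO ((Y # Ys') ! i)]))
     = EE (bas [a] * Q) (DO Y # Ys') + (\<Sum>j<length Ys'. EE (bas [a] * Q) (Y # Ys'[j := DO (Ys' ! j)]))"
    by (rule sum_update_Cons)
  have S2: "(\<Sum>i<length (Y # Ys'). EE Q ((Y # Ys')[i := DO ((Y # Ys') ! i)]))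
     = EE Q (DO Y # Ys') + (\<Sum>j<length Ys'. EE Q (Y # Ys'[j := DO (Ys' ! j)]))"
    by (rule sum_update_Cons)
  show ?thesis
  proof (cases Ys')
    case Nil
    show ?thesis using Nil
      by (simp add: Lhs_def L1 EE_letter_prod EE_letter1 DO_mult DO_letter EE_dg_prod sum_update_Cons algebra_simps)
  next
    case (Cons Y2 Ys'')
    have c1: "(case Ys' of [] \<Rightarrow> 0 | Y2 # Ys'' \<Rightarrow> EE (dg a) [Y, Y2] * EE Q Ys'') = EE (dg a) [Y, Y2] * EE Q Ys''"
      using Cons by simp
    have c2: "(case Ys' of [] \<Rightarrow> 0 | Y2 # Ys'' \<Rightarrow> Lhs (bas [a]) [Y, Y2] * EE Q Ys'') = EE (dg a) [Y, Y2] * EE Q Ys''"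
      using Cons L2 by simp
    show ?thesis
      unfolding Lhs_def[of "bas [a] * Q" "Y # Ys'"] Lhs_def[of Q "Y # Ys'"] Lhs_def[of Q Ys'] S1 S2 L1 c2
      by (simp add: EE_letter_prod EE_letter1 DO_mult DO_letter EE_dg_prod c1 A algebra_simps sum.distrib sum_distrib_left)
  qed
qed


lemma mrg_Suc: "mrg (Y # Ys) (Suc j) = Y # mrg Ys j" by (simp add: mrg_def)
lemma mrg_0: "mrg (Y # Y2 # Ys) 0 = (Y * Y2) # Ys" by (simp add: mrg_def)

lemma Rr_letter_prod: "Rr (bas [a] * Q) (Y # Ys') = bas [a] * Rr Q (Y # Ys') + Lw a Y * Rr Q Ys'
    + (Y * bas [a] + bas [a] * Y) * EE Q Ys'
    + (case Ys' of [] \<Rightarrow> 0 | Y2 # Ys'' \<Rightarrow> (Lw a (Y * Y2) + Lw a Y * Y2 + Y * Lw a Y2) * EE Q Ys'')"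
proof (cases Ys')
  case Nil thus ?thesis by (simp add: Rr_def algebra_simps)
next
  case (Cons Y2 Ys'')
  have S1: "(\<Sum>i<length (Y # Ys') - 1. EE P (mrg (Y # Ys') i)) = EE P ((Y * Y2) # Ys'') + (\<Sum>j<length Ys''. EE P (Y # mrg Ys' j))" for P
    using Cons by (simp add: sum.lessThan_Suc_shift mrg_0 mrg_Suc del: sum.lessThan_Suc)
  have S2: "(\<Sum>i<length Ys' - 1. EE P (mrg Ys' i)) = (\<Sum>j<length Ys''. EE P (mrg Ys' j))" for P
    using Cons by simp
  have bl: "butlast (Y # Ys') = Y # butlast Ys'" "last (Y # Ys') = last Ys'" using Cons by simp_all
  have ne: "Ys' \<noteq> []" "butlast (Y # Ys') \<noteq> []" using Cons by simp_all
  have c: "(case Ys' of [] \<Rightarrow> 0 | Y2 # Ys'' \<Rightarrow> (Lw a (Y * Y2) + Lw a Y * Y2 + Y * Lw a Y2) * EE Q Ys'')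
     = (Lw a (Y * Y2) + Lw a Y * Y2 + Y * Lw a Y2) * EE Q Ys''" using Cons by simp
  have t: "tl (Y # Ys') = Ys'" "hd (Y # Ys') = Y" "hd Ys' = Y2" "tl Ys' = Ys''" using Cons by simp_all
  have e1: "EE (bas [a] * Q) Ys' = bas [a] * EE Q Ys' + Lw a Y2 * EE Q Ys''"
    using Cons by (simp add: EE_letter_prod)
  have A: "(\<Sum>j<length Ys''. EE (bas [a] * Q) (Y # mrg Ys' j))
     = bas [a] * (\<Sum>j<length Ys''. EE Q (Y # mrg Ys' j)) + Lw a Y * (\<Sum>j<length Ys''. EE Q (mrg Ys' j))"
    by (simp add: EE_letter_prod sum.distrib sum_distrib_left)
  have Rr1: "Rr P (Y # Ys') = Y * EE P Ys' + EE P (Y # butlast Ys') * last Ys' + (EE P ((Y * Y2) # Ys'') + (\<Sum>j<length Ys''. EE P (Y # mrg Ys' j)))" for P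
    unfolding Rr_def using S1 bl t by simp
  have Rr2: "Rr P Ys' = Y2 * EE P Ys'' + EE P (butlast Ys') * last Ys' + (\<Sum>j<length Ys''. EE P (mrg Ys' j))" for P
    unfolding Rr_def using S2 ne t by simp
  show ?thesis
    unfolding Rr1 Rr2 c e1 A
    by (simp add: EE_letter_prod algebra_simps)
qed

lemma EE_one_ne: "Ys \<noteq> [] \<Longrightarrow> EE 1 Ys = 0" by (simp add: EE_one)

lemma Lhs_one: "Lhs 1 Ys = 0"
proof (cases "Ys = []")
  case True thus ?thesis by (simp add: Lhs_Nil)
next
  case False
  thus ?thesis unfolding Lhs_def by (simp add: EE_one_ne)
qed

lemma Rr_one: "Rr 1 Ys = 0"
proof (cases Ys)
  case Nil thus ?thesis by (simp add: Rr_Nil)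
next
  case (Cons Y Ys')
  show ?thesis
  proof (cases Ys')
    case Nil thus ?thesis using Cons by (simp add: Rr_def)
  next
    case (Cons Y2 Ys'')
    have "butlast Ys \<noteq> []" using Cons \<open>Ys = Y # Ys'\<close> by simp
    moreover have "mrg Ys i \<noteq> []" for i by (simp add: mrg_def)
    ultimately show ?thesis using Cons \<open>Ys = Y # Ys'\<close> by (simp add: Rr_def EE_one_ne)
  qed
qed

lemma Lhs_eq_Rr_bas: "Lhs (bas x) Ys = Rr (bas x) Ys"
proof (induction x arbitrary: Ys)
  case Nil thus ?case by (simp add: bas_Nil Lhs_one Rr_one)
next
  case (Cons a x)
  show ?case
  proof (cases Ys)
    case Nil thus ?thesis by (simp add: Lhs_Nil Rr_Nil)
  next
    case (Cons Y Ys')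
    show ?thesis
    proof (cases Ys')
      case Nil
      thus ?thesis using \<open>Ys = Y # Ys'\<close>
        by (simp add: bas_Cons[of a x] Lhs_letter_prod Rr_letter_prod Lhs_letter1 Cons.IH Lhs_Nil Rr_Nil add.commute)
    next
      case (Cons Y2 Ys'')
      thus ?thesis using \<open>Ys = Y # Ys'\<close>
        by (simp add: bas_Cons[of a x] Lhs_letter_prod Rr_letter_prod Lhs_letter1 Lhs_letter2 Cons.IH algebra_simps)
    qed
  qed
qed

lemma Lhs_lin: "Lhs (lin f X) Ys = lin (\<lambda>x. Lhs (f x) Ys) X"
  by (simp add: Lhs_def EE_lin DO_lin lin_fadd lin_fsum)

lemma Rr_lin: "Rr (lin f X) Ys = lin (\<lambda>x. Rr (f x) Ys) X"
  by (simp add: Rr_def EE_lin lin_fadd lin_fsum lin_mult_left lin_mult_right)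

lemma homotopy: "Lhs X Ys = Rr X Ys"
proof -
  have "Lhs (lin bas X) Ys = Rr (lin bas X) Ys" by (simp only: Lhs_lin Rr_lin Lhs_eq_Rr_bas)
  thus ?thesis by simp
qed

end

context cdgb
begin

lemma finite_E[simp]: "finite X \<Longrightarrow> (\<And>Y. Y \<in> set Ys \<Longrightarrow> finite Y) \<Longrightarrow> finite (E A X Ys)"
  unfolding E_def by (intro finite_zsum finite_listset) auto

lemma finite_E2[simp]: "finite X \<Longrightarrow> \<forall>Y\<in>set Ys. finite Y \<Longrightarrow> finite (E A X Ys)"
  by simp

lemma finite_dO[simp]: "finite X \<Longrightarrow> finite (dO A X)"
  unfolding dO_def by (intro finite_zsum) auto

lemma finite_cup1[simp]: "finite X \<Longrightarrow> finite Y \<Longrightarrow> finite (cup1 A X Y)"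
  unfolding cup1_def cup1_word_def by (intro finite_zsum) auto

lemma finite_cup1_word[simp]: "finite (cup1_word A a w)"
  unfolding cup1_word_def by (intro finite_zsum) auto

lemma Ew_single: "Ew a [w] = (\<Sum>k<length a. bas (take k a) * dia (a ! k) w * bas (drop (Suc k) a))"
proof (induction a)
  case Nil thus ?case by (simp add: Ew_Nil1)
next
  case (Cons b a)
  have "Ew (b # a) [w] = bas [b] * Ew a [w] + dia b w * bas a"
    by (simp add: Ew_Cons Ew_Nil2)
  also have "\<dots> = (\<Sum>k<length (b # a). bas (take k (b # a)) * dia ((b # a) ! k) w * bas (drop (Suc k) (b # a)))"
    by (simp add: Cons.IH sum.lessThan_Suc_shift sum_distrib_left bas_Nil bas_mult times_list_def mult.assoc[symmetric]
        del: sum.lessThan_Suc)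
  finally show ?case .
qed

lemma Zv_cup1_word: "Zv (cup1_word A a w) = Ew a [w]"
proof -
  have "Zv (cup1_word A a w) = (\<Sum>k<length a. lin (\<lambda>c. bas (take k a @ c @ drop (Suc k) a)) (dia (a ! k) w))"
    unfolding cup1_word_def by (simp add: Zv_zsum finite_zsum lin_Zv[symmetric] Zv_diamond)
  also have "\<dots> = Ew a [w]"
    unfolding Ew_single by (simp add: bas_append mult_lin_left[symmetric] mult_lin_right[symmetric] mult.assoc)
  finally show ?thesis .
qed

lemma part4: "finite x \<Longrightarrow> finite y \<Longrightarrow> E A x [y] = cup1 A x y"
proof -
  assume fx: "finite x" and fy: "finite y"
  have "Zv (E A x [y]) = Zv (cup1 A x y)"
  proof -
    have "Zv (E A x [y]) = EE (Zv x) [Zv y]" using fx fy Zv_E[of x "[y]"] by simp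
    also have "\<dots> = lin (\<lambda>a. lin (\<lambda>w. Ew a [w]) (Zv y)) (Zv x)" by (simp add: EE_def)
    also have "\<dots> = Zv (cup1 A x y)"
      unfolding cup1_def using fx fy by (simp add: Zv_zsum_fin finite_zsum Zv_cup1_word)
    finally show ?thesis .
  qed
  thus ?thesis using fx fy by (intro Zv_inj finite_E finite_cup1) auto
qed

lemma part2:
  assumes fx1: "finite x1" and fx2: "finite x2" and fys: "\<And>y. y \<in> set ys \<Longrightarrow> finite y" and l: "1 \<le> length ys"
  shows "E A (omult x1 x2) ys
     = zadd (zadd (omult x1 (E A x2 ys)) (omult (E A x1 ys) x2))
            (zsum (\<lambda>p. omult (E A x1 (take p ys)) (E A x2 (drop p ys))) {1..<length ys})"
proof -
  let ?X1 = "Zv x1" and ?X2 = "Zv x2" and ?Ys = "map Zv ys" and ?k = "length ys"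
  have ft: "\<And>p y. y \<in> set (take p ys) \<Longrightarrow> finite y" "\<And>p y. y \<in> set (drop p ys) \<Longrightarrow> finite y"
    using fys by (auto dest: in_set_takeD in_set_dropD)
  have "Zv (E A (omult x1 x2) ys) = (\<Sum>p\<le>?k. EE ?X1 (take p ?Ys) * EE ?X2 (drop p ?Ys))"
    using fx1 fx2 fys by (simp add: Zv_E finite_omult Zv_omult EE_prod)
  also have "\<dots> = EE ?X1 (take 0 ?Ys) * EE ?X2 (drop 0 ?Ys) + (\<Sum>p\<in>{1..<?k}. EE ?X1 (take p ?Ys) * EE ?X2 (drop p ?Ys))
       + EE ?X1 (take ?k ?Ys) * EE ?X2 (drop ?k ?Ys)"
  proof -
    define f where "f = (\<lambda>p. EE ?X1 (take p ?Ys) * EE ?X2 (drop p ?Ys))"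
    have e: "{..?k} = insert 0 (insert ?k {1..<?k})" using l by auto
    have n1: "0 \<notin> insert ?k {1..<?k}" using l by auto
    have n2: "?k \<notin> {1..<?k}" by auto
    have "(\<Sum>p\<le>?k. f p) = f 0 + (f ?k + (\<Sum>p\<in>{1..<?k}. f p))"
      unfolding e by (subst sum.insert[OF _ n1], simp, subst sum.insert[OF _ n2], simp, rule refl)
    thus ?thesis unfolding f_def by (simp add: algebra_simps)
  qed
  also have "\<dots> = Zv (zadd (zadd (omult x1 (E A x2 ys)) (omult (E A x1 ys) x2))
            (zsum (\<lambda>p. omult (E A x1 (take p ys)) (E A x2 (drop p ys))) {1..<length ys}))"
    using fx1 fx2 fys ft
    by (simp add: Zv_zadd finite_omult Zv_omult Zv_E Zv_zsum finite_zsum take_map drop_map algebra_simps)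
  moreover have "\<forall>y\<in>set ys. finite y" "\<forall>p. \<forall>y\<in>set (take p ys). finite y" "\<forall>p. \<forall>y\<in>set (drop p ys). finite y"
    using fys ft by auto
  ultimately show ?thesis using fx1 fx2
    by (intro Zv_inj) (auto intro!: finite_zadd finite_zsum finite_omult simp: finite_omult)
qed


lemma map_Zv_jac_args:
  assumes fys: "\<forall>y\<in>set ys. finite y" and fzs: "\<forall>z\<in>set zs. finite z"
  shows "map Zv (jac_args A ys zs is ns) = jargs (map Zv ys) (map Zv zs) is ns"
    and "\<forall>w\<in>set (jac_args A ys zs is ns). finite w"
proof -
  have fz: "\<And>z p q. z \<in> set (take p (drop q zs)) \<Longrightarrow> finite z"
    using fzs by (auto dest: in_set_takeD in_set_dropD)
  have fE: "finite (E A (ys ! j) (take (ns ! j) (drop (is ! j) zs)))" if "j < length ys" for j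
    using that fys fz by (intro finite_E2) auto
  have ZE: "Zv (E A (ys ! j) (take (ns ! j) (drop (is ! j) zs))) = EE (map Zv ys ! j) (map Zv (take (ns ! j) (drop (is ! j) zs)))"
    if "j < length ys" for j
    using that fys fz Zv_E[of "ys ! j" "take (ns ! j) (drop (is ! j) zs)"] by simp
  show "map Zv (jac_args A ys zs is ns) = jargs (map Zv ys) (map Zv zs) is ns"
    unfolding jac_args_def jargs_def
    by (simp add: map_concat take_map[symmetric] drop_map[symmetric], intro arg_cong[where f=concat] map_cong refl)
       (simp add: ZE take_map drop_map)
  show "\<forall>w\<in>set (jac_args A ys zs is ns). finite w"
    unfolding jac_args_def using fE fzs by (auto dest: in_set_takeD in_set_dropD)
qed

lemma part3:
  assumes fx: "finite x" and fys: "\<forall>y\<in>set ys. finite y" and fzs: "\<forall>z\<in>set zs. finite z"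
  shows "E A (E A x ys) zs = zsum (\<lambda>(is, ns). E A x (jac_args A ys zs is ns)) (jac_index (length ys) (length zs))"
proof -
  have fE: "finite (E A x ys)" using fx fys by simp
  have "Zv (E A (E A x ys) zs) = EE (EE (Zv x) (map Zv ys)) (map Zv zs)"
    using fE fx fys fzs Zv_E[of "E A x ys" zs] Zv_E[of x ys] by simp
  also have "\<dots> = JAC (Zv x) (map Zv ys) (map Zv zs)" by (rule pre_jacobi)
  also have "\<dots> = (\<Sum>q\<in>jac_index (length ys) (length zs). Zv (E A x (jac_args A ys zs (fst q) (snd q))))"
    unfolding JAC_def
    by (rule sum.cong) (use fx map_Zv_jac_args[OF fys fzs] Zv_E[of x] in simp_all)
  also have "\<dots> = Zv (zsum (\<lambda>(is, ns). E A x (jac_args A ys zs is ns)) (jac_index (length ys) (length zs)))"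
    using map_Zv_jac_args(2)[OF fys fzs] fx by (subst Zv_zsum) (auto simp: split_def)
  finally show ?thesis
    using map_Zv_jac_args(2)[OF fys fzs] fx fE fzs
    by (intro Zv_inj) (auto intro!: finite_zsum simp: split_def)
qed

lemma part1:
  assumes fx: "finite x" and fys: "\<forall>y\<in>set ys. finite y" and l: "1 \<le> length ys"
  shows "zadd (zadd (dO A (E A x ys)) (E A (dO A x) ys))
            (zsum (\<lambda>i. E A x (ys[i := dO A (ys ! i)])) {..<length ys})
     = zadd (zadd (omult (hd ys) (E A x (tl ys))) (omult (E A x (butlast ys)) (last ys)))
            (zsum (\<lambda>i. E A x (take i ys @ [omult (ys ! i) (ys ! Suc i)] @ drop (Suc (Suc i)) ys))
                  {..<length ys - 1})"
  (is "?L = ?R")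
proof -
  let ?X = "Zv x" and ?Ys = "map Zv ys"
  have ne: "ys \<noteq> []" using l by auto
  have fupd: "\<forall>y\<in>set (ys[i := dO A (ys ! i)]). finite y" if "i < length ys" for i
    using fys that by (auto dest: set_update_subset_insert[THEN subsetD])
  have fmrg: "\<forall>y\<in>set (take i ys @ [omult (ys ! i) (ys ! Suc i)] @ drop (Suc (Suc i)) ys). finite y"
    if "i < length ys - 1" for i
    using fys that by (auto dest: in_set_takeD in_set_dropD intro!: finite_omult)
  have ftl: "\<forall>y\<in>set (tl ys). finite y" "\<forall>y\<in>set (butlast ys). finite y" "finite (hd ys)" "finite (last ys)"
    using fys ne by (auto dest: in_set_butlastD list.set_sel(2))
  have fdO: "finite (dO A x)" using fx by simp
  have "Zv ?L = Lhs ?X ?Ys"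
  proof -
    have s: "(\<Sum>i<length ys. Zv (E A x (ys[i := dO A (ys ! i)]))) = (\<Sum>i<length ys. EE ?X (?Ys[i := DO (?Ys ! i)]))"
    proof (rule sum.cong[OF refl])
      fix i assume i: "i \<in> {..<length ys}"
      have "Zv (E A x (ys[i := dO A (ys ! i)])) = EE ?X (map Zv (ys[i := dO A (ys ! i)]))"
        by (rule Zv_E[OF fx]) (use fupd[of i] i in auto)
      also have "map Zv (ys[i := dO A (ys ! i)]) = ?Ys[i := DO (?Ys ! i)]"
        using i fys by (simp add: map_update Zv_dO)
      finally show "Zv (E A x (ys[i := dO A (ys ! i)])) = EE ?X (?Ys[i := DO (?Ys ! i)])" .
    qed
    have fEy: "finite (E A x ys)" using fx fys by simp
    have fE2: "finite (E A (dO A x) ys)" using fdO fys by simp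
    have fE3: "finite (E A x (ys[i := dO A (ys ! i)]))" if "i \<in> {..<length ys}" for i
      using fx fupd[of i] that by simp
    have "Zv ?L = Zv (dO A (E A x ys)) + Zv (E A (dO A x) ys) + Zv (zsum (\<lambda>i. E A x (ys[i := dO A (ys ! i)])) {..<length ys})"
    proof -
      have fZ: "finite (zsum (\<lambda>i. E A x (ys[i := dO A (ys ! i)])) {..<length ys})"
        by (rule finite_zsum) (use fE3 in auto)
      show ?thesis using fEy fE2 fZ by (simp add: Zv_zadd)
    qed
    also have "\<dots> = DO (EE ?X ?Ys) + EE (DO ?X) ?Ys + (\<Sum>i<length ys. Zv (E A x (ys[i := dO A (ys ! i)])))"
    proof -
      have Zz: "Zv (zsum (\<lambda>i. E A x (ys[i := dO A (ys ! i)])) {..<length ys}) = (\<Sum>i<length ys. Zv (E A x (ys[i := dO A (ys ! i)])))"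
        by (rule Zv_zsum) (use fE3 in auto)
      show ?thesis using fEy fx fys fdO Zv_E[of x ys] Zv_E[of "dO A x" ys] by (simp add: Zv_dO Zz)
    qed
    also have "\<dots> = Lhs ?X ?Ys" unfolding s Lhs_def by simp
    finally show ?thesis .
  qed
  also have "Lhs ?X ?Ys = Rr ?X ?Ys" by (rule homotopy)
  also have "Rr ?X ?Ys = Zv ?R"
  proof -
    have s: "(\<Sum>i<length ys - 1. EE ?X (mrg ?Ys i))
        = (\<Sum>i<length ys - 1. Zv (E A x (take i ys @ [omult (ys ! i) (ys ! Suc i)] @ drop (Suc (Suc i)) ys)))"
    proof (rule sum.cong[OF refl])
      fix i assume i: "i \<in> {..<length ys - 1}"
      have "Zv (E A x (take i ys @ [omult (ys ! i) (ys ! Suc i)] @ drop (Suc (Suc i)) ys))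
          = EE ?X (map Zv (take i ys @ [omult (ys ! i) (ys ! Suc i)] @ drop (Suc (Suc i)) ys))"
        by (rule Zv_E[OF fx]) (use fmrg[of i] i in auto)
      also have "map Zv (take i ys @ [omult (ys ! i) (ys ! Suc i)] @ drop (Suc (Suc i)) ys) = mrg ?Ys i"
        using i fys by (simp add: mrg_def take_map drop_map Zv_omult)
      finally show "EE ?X (mrg ?Ys i) = Zv (E A x (take i ys @ [omult (ys ! i) (ys ! Suc i)] @ drop (Suc (Suc i)) ys))" by simp
    qed
    have "Rr ?X ?Ys = Zv (hd ys) * EE ?X (map Zv (tl ys)) + EE ?X (map Zv (butlast ys)) * Zv (last ys)
        + (\<Sum>i<length ys - 1. EE ?X (mrg ?Ys i))"
      using ne by (simp add: Rr_def hd_map map_tl map_butlast last_map)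
    also have "\<dots> = Zv ?R"
    proof -
      have fE4: "finite (E A x (take i ys @ [omult (ys ! i) (ys ! Suc i)] @ drop (Suc (Suc i)) ys))"
        if "i \<in> {..<length ys - 1}" for i using fmrg[of i] that fx by simp
      have Zz: "Zv (zsum (\<lambda>i. E A x (take i ys @ [omult (ys ! i) (ys ! Suc i)] @ drop (Suc (Suc i)) ys)) {..<length ys - 1})
          = (\<Sum>i<length ys - 1. Zv (E A x (take i ys @ [omult (ys ! i) (ys ! Suc i)] @ drop (Suc (Suc i)) ys)))"
        by (rule Zv_zsum) (use fE4 in auto)
      have fZ: "finite (zsum (\<lambda>i. E A x (take i ys @ [omult (ys ! i) (ys ! Suc i)] @ drop (Suc (Suc i)) ys)) {..<length ys - 1})"
        by (rule finite_zsum) (use fE4 in auto)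
      have f1: "finite (E A x (tl ys))" "finite (E A x (butlast ys))" using fx ftl by simp_all
      show ?thesis
        unfolding s using fx ftl f1 fZ Zz Zv_E[of x "tl ys"] Zv_E[of x "butlast ys"]
        by (simp add: Zv_zadd Zv_omult finite_omult)
    qed
    finally show ?thesis .
  qed
  finally show ?thesis
    using fx fys fdO fupd fmrg ftl
    by (intro Zv_inj) (auto intro!: finite_zadd finite_zsum finite_omult simp: finite_omult)
qed

end

theorem mainTheorem4:
  fixes A :: "'b dgba"
  assumes "connected_dg_bialgebra A"
  shows
   "(\<forall>x ys. Om A x \<and> (\<forall>y\<in>set ys. Om A y) \<and> 1 \<le> length ys \<longrightarrow>
       zadd (zadd (dO A (E A x ys)) (E A (dO A x) ys))
            (zsum (\<lambda>i. E A x (ys[i := dO A (ys ! i)])) {..<length ys})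
     = zadd (zadd (omult (hd ys) (E A x (tl ys))) (omult (E A x (butlast ys)) (last ys)))
            (zsum (\<lambda>i. E A x (take i ys @ [omult (ys ! i) (ys ! Suc i)] @ drop (Suc (Suc i)) ys))
                  {..<length ys - 1})) \<and>
    (\<forall>x1 x2 ys. Om A x1 \<and> Om A x2 \<and> (\<forall>y\<in>set ys. Om A y) \<and> 1 \<le> length ys \<longrightarrow>
       E A (omult x1 x2) ys
     = zadd (zadd (omult x1 (E A x2 ys)) (omult (E A x1 ys) x2))
            (zsum (\<lambda>p. omult (E A x1 (take p ys)) (E A x2 (drop p ys))) {1..<length ys})) \<and>
    (\<forall>x ys zs. Om A x \<and> (\<forall>y\<in>set ys. Om A y) \<and> (\<forall>z\<in>set zs. Om A z) \<and>
         1 \<le> length ys \<and> 1 \<le> length zs \<longrightarrow>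
       E A (E A x ys) zs
     = zsum (\<lambda>(is, ns). E A x (jac_args A ys zs is ns)) (jac_index (length ys) (length zs))) \<and>
    (\<forall>x y. Om A x \<and> Om A y \<longrightarrow> E A x [y] = cup1 A x y)"
proof -
  interpret cdgb A using assms by (simp add: cdgb_def)
  have Omf: "\<And>x. Om A x \<Longrightarrow> finite x" by (simp add: Om_def)
  have Omall: "\<And>ys. \<forall>y\<in>set ys. Om A y \<Longrightarrow> \<forall>y\<in>set ys. finite y" using Omf by blast
  show ?thesis
  proof (intro conjI allI impI)
    fix x ys assume h: "Om A x \<and> (\<forall>y\<in>set ys. Om A y) \<and> 1 \<le> length ys"
    show "zadd (zadd (dO A (E A x ys)) (E A (dO A x) ys))
            (zsum (\<lambda>i. E A x (ys[i := dO A (ys ! i)])) {..<length ys})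
     = zadd (zadd (omult (hd ys) (E A x (tl ys))) (omult (E A x (butlast ys)) (last ys)))
            (zsum (\<lambda>i. E A x (take i ys @ [omult (ys ! i) (ys ! Suc i)] @ drop (Suc (Suc i)) ys))
                  {..<length ys - 1})"
      using h Omf Omall by (intro part1) auto
  next
    fix x1 x2 ys assume h: "Om A x1 \<and> Om A x2 \<and> (\<forall>y\<in>set ys. Om A y) \<and> 1 \<le> length ys"
    show "E A (omult x1 x2) ys
     = zadd (zadd (omult x1 (E A x2 ys)) (omult (E A x1 ys) x2))
            (zsum (\<lambda>p. omult (E A x1 (take p ys)) (E A x2 (drop p ys))) {1..<length ys})"
      using h Omf Omall by (intro part2) auto
  next
    fix x ys zs assume h: "Om A x \<and> (\<forall>y\<in>set ys. Om A y) \<and> (\<forall>z\<in>set zs. Om A z) \<and>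
         1 \<le> length ys \<and> 1 \<le> length zs"
    show "E A (E A x ys) zs
     = zsum (\<lambda>(is, ns). E A x (jac_args A ys zs is ns)) (jac_index (length ys) (length zs))"
      using h Omf Omall by (intro part3) auto
  next
    fix x y assume h: "Om A x \<and> Om A y"
    show "E A x [y] = cup1 A x y" using h Omf by (intro part4) auto
  qed
qed


end
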